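(* Let $n,m$ be positive integers, $N=\{1,\dots,n\}$, and let $g$ be a kernel on $N$. The following are equivalent: (i) $g$ is a discrete $m$-interpolation kernel; (ii) for all $I_0\subseteq I_1\subseteq N$ and all $z:I_0\to\mathcal M_m(\mathbb C)$, $\|T_{g,z}(I_1)\|\le\|T_{g,z}\|$; (iii) for all $I_0\subseteq I_1\subseteq N$ such that $I_1\setminus I_0$ consists of a single point, and all $z:I_0\to\mathcal M_m(\mathbb C)$, $\|T_{g,z}(I_1)\|\le\|T_{g,z}\|$.
   Context: A function $g:N\times N\to\mathbb C$ is a kernel on $N$ if the matrix $(g(i,j))_{i,j\in N}$ is positive semidefinite and, with $\mathrm{spt}(g)=\{i:g(i,i)\ne0\}$, the matrix $(g(i,j))_{i,j\in\mathrm{spt}(g)}$ is positive definite. Let $g_i(j)=g(i,j)$ and let $H_g$ be the (finite-dimensional) Hilbert space spanned by $\{g_i:i\in\mathrm{spt}(g)\}$ with $\langle g_i,g_j\rangle=g(i,j)$... more precisely $\langle\sum c_ig_i,\sum d_jg_j\rangle=\sum_{i,j}g(i,j)c_i\bar d_j$. Let $H_{g,m}=\mathbb C^m\otimes H_g$, writing $ag_i=a\otimes g_i$. For $I\subseteq N$ let $H_{g,m}(I)=\mathrm{span}\{ag_i:a\in\mathbb C^m,\ i\in I\cap\mathrm{spt}(g)\}$, and for $z:I\to\mathcal M_m(\mathbb C)$ let $T_{g,z}\in\mathcal L(H_{g,m}(I))$ be defined by $T_{g,z}(ag_i)=(z(i)^*a)g_i$ for $a\in\mathbb C^m$, $i\in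 I\cap\mathrm{spt}(g)$. For $I_0\subseteq I_1\subseteq N$ let $H_{g,m}(I_0,I_1)=H_{g,m}(I_1)\ominus H_{g,m}(I_1\setminus I_0)$, and for $z:I_0\to\mathcal M_m(\mathbb C)$ let $T_{g,z}(I_1)=PT_{g,\tilde z}|_{H_{g,m}(I_0,I_1)}$, where $P$ is the orthogonal projection of $H_{g,m}(I_1)$ onto $H_{g,m}(I_0,I_1)$ and $\tilde z:I_1\to\mathcal M_m(\mathbb C)$ is any extension of $z$ (the result does not depend on the extension). $g$ is a discrete $m$-interpolation kernel if for every $I\subseteq N$ and every $z:I\to\mathcal M_m(\mathbb C)$, $\|T_{g,z}\|=\inf\{\|T_{g,\tilde z}\|:\tilde z:N\to\mathcal M_m(\mathbb C),\ \tilde z|_I=z\}$. *)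

theory Defs
  imports "HOL-Analysis.Analysis"
begin

text \<open>The index set N is modelled by a finite type 'n (N = UNIV), the space C^m by
  complex^'m (m = CARD('m)), and M_m(C) by complex^'m^'m.
  An element sum_i a_i g_i of H_{g,m} (i ranging over spt g, a_i in C^m) is represented by
  its coefficient function v :: 'n => complex^'m with v i = a_i (and v i = 0 off spt g);
  since the g_i (i in spt g) are linearly independent this representation is unique.\<close>

definition spt :: "('n \<Rightarrow> 'n \<Rightarrow> complex) \<Rightarrow> 'n set" where
  "spt g = {i. g i i \<noteq> 0}"

definition qform :: "('n::finite \<Rightarrow> 'n \<Rightarrow> complex) \<Rightarrow> ('n \<Rightarrow> complex) \<Rightarrow> complex" where
  "qform g c = (\<Sum>i\<in>UNIV. \<Sum>j\<in>UNIV. g i j * c i * cnj (c j))"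

definition is_kernel :: "('n::finite \<Rightarrow> 'n \<Rightarrow> complex) \<Rightarrow> bool" where
  "is_kernel g \<longleftrightarrow>
     (\<forall>c. Im (qform g c) = 0 \<and> Re (qform g c) \<ge> 0) \<and>
     (\<forall>c. (\<forall>i. i \<notin> spt g \<longrightarrow> c i = 0) \<and> (\<exists>i. c i \<noteq> 0) \<longrightarrow> Re (qform g c) > 0)"

text \<open>Inner product of H_{g,m}: <sum a_i g_i, sum b_j g_j> = sum g(i,j) <a_i,b_j>_{C^m}.\<close>
definition ipH :: "('n::finite \<Rightarrow> 'n \<Rightarrow> complex) \<Rightarrow> ('n \<Rightarrow> complex^'m::finite) \<Rightarrow> ('n \<Rightarrow> complex^'m) \<Rightarrow> complex" where
  "ipH g v w = (\<Sum>i\<in>spt g. \<Sum>j\<in>spt g. g i j * (\<Sum>k\<in>UNIV. v i $ k * cnj (w j $ k)))"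

definition nrmH :: "('n::finite \<Rightarrow> 'n \<Rightarrow> complex) \<Rightarrow> ('n \<Rightarrow> complex^'m::finite) \<Rightarrow> real" where
  "nrmH g v = sqrt (Re (ipH g v v))"

text \<open>H_{g,m}(I) = span {a g_i : a in C^m, i in I \<inter> spt g}.\<close>
definition Hsub :: "('n::finite \<Rightarrow> 'n \<Rightarrow> complex) \<Rightarrow> 'n set \<Rightarrow> ('n \<Rightarrow> complex^'m::finite) set" where
  "Hsub g I = {v. \<forall>i. i \<notin> I \<inter> spt g \<longrightarrow> v i = 0}"

definition Hcomp :: "('n::finite \<Rightarrow> 'n \<Rightarrow> complex) \<Rightarrow> 'n set \<Rightarrow> 'n set \<Rightarrow> ('n \<Rightarrow> complex^'m::finite) set" where
  "Hcomp g I0 I1 = {v \<in> Hsub g I1. \<forall>u \<in> Hsub g (I1 - I0). ipH g v u = 0}"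

definition adjm :: "complex^'m::finite^'m \<Rightarrow> complex^'m^'m" where
  "adjm A = (\<chi> k l. cnj (A $ l $ k))"

definition Tmap :: "('n \<Rightarrow> complex^'m::finite^'m) \<Rightarrow> ('n \<Rightarrow> complex^'m) \<Rightarrow> ('n \<Rightarrow> complex^'m)" where
  "Tmap z v = (\<lambda>i. adjm (z i) *v v i)"

definition projH :: "('n::finite \<Rightarrow> 'n \<Rightarrow> complex) \<Rightarrow> ('n \<Rightarrow> complex^'m::finite) set \<Rightarrow> ('n \<Rightarrow> complex^'m) \<Rightarrow> ('n \<Rightarrow> complex^'m)" where
  "projH g W w = (THE p. p \<in> W \<and> (\<forall>u\<in>W. ipH g (\<lambda>i. w i - p i) u = 0))"

text \<open>T_{g,z}(I1) = P T_{g,z} restricted to H_{g,m}(I0,I1) (z itself, a total function,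
  serves as the extension of z|I0 to I1).\<close>
definition Tcomp :: "('n::finite \<Rightarrow> 'n \<Rightarrow> complex) \<Rightarrow> ('n \<Rightarrow> complex^'m::finite^'m) \<Rightarrow> 'n set \<Rightarrow> 'n set
     \<Rightarrow> ('n \<Rightarrow> complex^'m) \<Rightarrow> ('n \<Rightarrow> complex^'m)" where
  "Tcomp g z I0 I1 v = projH g (Hcomp g I0 I1) (Tmap z v)"

definition opnorm :: "('n::finite \<Rightarrow> 'n \<Rightarrow> complex) \<Rightarrow> ('n \<Rightarrow> complex^'m::finite) set
     \<Rightarrow> (('n \<Rightarrow> complex^'m) \<Rightarrow> ('n \<Rightarrow> complex^'m)) \<Rightarrow> real" where
  "opnorm g V T = Sup {nrmH g (T v) | v. v \<in> V \<and> nrmH g v \<le> 1}"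

text \<open>Discrete m-interpolation kernel (m = CARD('m)); z : I -> M_m is a total function whose
  values off I are irrelevant.\<close>
definition discrete_interp_kernel :: "('n::finite \<Rightarrow> 'n \<Rightarrow> complex) \<Rightarrow> 'm::finite itself \<Rightarrow> bool" where
  "discrete_interp_kernel g TYPE('m) \<longleftrightarrow>
     (\<forall>I (z :: 'n \<Rightarrow> complex^'m^'m).
        opnorm g (Hsub g I) (Tmap z) =
        Inf {opnorm g (Hsub g UNIV) (Tmap w) | w. \<forall>i\<in>I. w i = z i})"

end

theory Submission
  imports Defs
begin
definition vadd :: "('n \<Rightarrow> complex^'m) \<Rightarrow> ('n \<Rightarrow> complex^'m) \<Rightarrow> ('n \<Rightarrow> complex^'m)"
  where "vadd v w = (\<lambda>i. v i + w i)"
definition vsub :: "('n \<Rightarrow> complex^'m) \<Rightarrow> ('n \<Rightarrow> complex^'m) \<Rightarrow> ('n \<Rightarrow> complex^'m)"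
  where "vsub v w = (\<lambda>i. v i - w i)"
definition vsc :: "complex \<Rightarrow> ('n \<Rightarrow> complex^'m) \<Rightarrow> ('n \<Rightarrow> complex^'m)"
  where "vsc c v = (\<lambda>i. c *s v i)"
definition cip :: "complex^'m::finite \<Rightarrow> complex^'m \<Rightarrow> complex"
  where "cip a b = (\<Sum>k\<in>UNIV. a $ k * cnj (b $ k))"

lemma qform_two:
  fixes g :: "'n::finite \<Rightarrow> 'n \<Rightarrow> complex"
  assumes "i \<noteq> j"
  shows "qform g (\<lambda>k. if k = i then 1 else if k = j then x else 0)
     = g i i + g i j * cnj x + g j i * x + g j j * x * cnj x"
proof -
  let ?c = "\<lambda>k. if k = i then 1 else if k = j then x else 0"
  have r: "\<And>a. (\<Sum>b\<in>UNIV. g a b * ?c a * cnj (?c b)) = (\<Sum>b\<in>{i,j}. g a b * ?c a * cnj (?c b))"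
    by (rule sum.mono_neutral_right) auto
  have "qform g ?c = (\<Sum>a\<in>UNIV. \<Sum>b\<in>{i,j}. g a b * ?c a * cnj (?c b))"
    unfolding qform_def using r by simp
  also have "\<dots> = (\<Sum>a\<in>{i,j}. \<Sum>b\<in>{i,j}. g a b * ?c a * cnj (?c b))"
    by (rule sum.mono_neutral_right) auto
  finally show ?thesis using assms by simp
qed

lemma qform_one:
  fixes g :: "'n::finite \<Rightarrow> 'n \<Rightarrow> complex"
  shows "qform g (\<lambda>k. if k = i then 1 else 0) = g i i"
proof -
  let ?c = "\<lambda>k. if k = i then (1::complex) else 0"
  have r: "\<And>a. (\<Sum>b\<in>UNIV. g a b * ?c a * cnj (?c b)) = (\<Sum>b\<in>{i}. g a b * ?c a * cnj (?c b))"
    by (rule sum.mono_neutral_right) auto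
  have "qform g ?c = (\<Sum>a\<in>UNIV. \<Sum>b\<in>{i}. g a b * ?c a * cnj (?c b))"
    unfolding qform_def using r by simp
  also have "\<dots> = (\<Sum>a\<in>{i}. \<Sum>b\<in>{i}. g a b * ?c a * cnj (?c b))"
    by (rule sum.mono_neutral_right) auto
  finally show ?thesis by simp
qed

lemma kernel_herm:
  fixes g :: "'n::finite \<Rightarrow> 'n \<Rightarrow> complex"
  assumes "is_kernel g"
  shows "g j i = cnj (g i j)"
proof -
  have im: "\<And>c. Im (qform g c) = 0" using assms unfolding is_kernel_def by blast
  have d: "\<And>k. Im (g k k) = 0" using im[of "\<lambda>x. if x = k then 1 else 0" for k] qform_one by metis
  show ?thesis
  proof (cases "i = j")
    case True then show ?thesis using d[of i] by (simp add: complex_eq_iff)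
  next
    case False
    have 1: "Im (g i j + g j i) = 0" using im[of "\<lambda>k. if k = i then 1 else if k = j then 1 else 0"]
      qform_two[OF False, of g 1] d[of i] d[of j] by simp
    have 2: "Re (g j i) - Re (g i j) = 0" using im[of "\<lambda>k. if k = i then 1 else if k = j then \<i> else 0"]
      qform_two[OF False, of g \<i>] d[of i] d[of j] by simp
    show ?thesis using 1 2 by (simp add: complex_eq_iff)
  qed
qed

lemma cip_add_left: "cip (a + b) c = cip a c + cip b c"
  by (simp add: cip_def sum.distrib distrib_right)
lemma cip_add_right: "cip a (b + c) = cip a b + cip a c"
  by (simp add: cip_def sum.distrib distrib_left)
lemma cip_sub_left: "cip (a - b) c = cip a c - cip b c"
  by (simp add: cip_def sum_subtractf left_diff_distrib)
lemma cip_sub_right: "cip a (b - c) = cip a b - cip a c"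
  by (simp add: cip_def sum_subtractf right_diff_distrib)
lemma cip_sc_left: "cip (x *s a) c = x * cip a c"
  by (simp add: cip_def sum_distrib_left mult.assoc)
lemma cip_sc_right: "cip a (x *s c) = cnj x * cip a c"
  by (simp add: cip_def sum_distrib_left mult.assoc mult.left_commute)
lemma cip_cnj: "cnj (cip a b) = cip b a"
  by (simp add: cip_def mult.commute)
lemma cip_zero_left[simp]: "cip 0 a = 0" by (simp add: cip_def)
lemma cip_zero_right[simp]: "cip a 0 = 0" by (simp add: cip_def)

lemma ipH_cip: "ipH g v w = (\<Sum>i\<in>spt g. \<Sum>j\<in>spt g. g i j * cip (v i) (w j))"
  by (simp add: ipH_def cip_def)

lemma ipH_vadd_left: "ipH g (vadd v w) u = ipH g v u + ipH g w u"
  by (simp add: ipH_cip vadd_def cip_add_left sum.distrib distrib_left)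
lemma ipH_vadd_right: "ipH g u (vadd v w) = ipH g u v + ipH g u w"
  by (simp add: ipH_cip vadd_def cip_add_right sum.distrib distrib_left)
lemma ipH_vsub_left: "ipH g (vsub v w) u = ipH g v u - ipH g w u"
  by (simp add: ipH_cip vsub_def cip_sub_left sum_subtractf right_diff_distrib)
lemma ipH_vsub_right: "ipH g u (vsub v w) = ipH g u v - ipH g u w"
  by (simp add: ipH_cip vsub_def cip_sub_right sum_subtractf right_diff_distrib)
lemma ipH_vsc_left: "ipH g (vsc c v) u = c * ipH g v u"
  by (simp add: ipH_cip vsc_def cip_sc_left sum_distrib_left mult.left_commute)
lemma ipH_vsc_right: "ipH g u (vsc c v) = cnj c * ipH g u v"
  by (simp add: ipH_cip vsc_def cip_sc_right sum_distrib_left mult.left_commute)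
lemma ipH_zero_left: "ipH g (\<lambda>i. 0) u = 0" by (simp add: ipH_cip)
lemma ipH_zero_right: "ipH g u (\<lambda>i. 0) = 0" by (simp add: ipH_cip)

lemma ipH_sym:
  assumes "is_kernel g"
  shows "ipH g w v = cnj (ipH g v w)"
proof -
  have h: "cnj (g i j) = g j i" for i j using kernel_herm[OF assms, of j i] by simp
  have "cnj (ipH g v w) = (\<Sum>i\<in>spt g. \<Sum>j\<in>spt g. g j i * cip (w j) (v i))"
    by (simp add: ipH_cip h cip_cnj)
  also have "\<dots> = ipH g w v" unfolding ipH_cip by (rule sum.swap)
  finally show ?thesis by simp
qed

lemma ipH_self_qform:
  fixes g :: "'n::finite \<Rightarrow> 'n \<Rightarrow> complex"
  shows "ipH g v v = (\<Sum>k\<in>UNIV. qform g (\<lambda>i. if i \<in> spt g then v i $ k else 0))"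
proof -
  have q: "qform g (\<lambda>i. if i \<in> spt g then v i $ k else 0)
      = (\<Sum>i\<in>spt g. \<Sum>j\<in>spt g. g i j * (v i $ k * cnj (v j $ k)))" for k
  proof -
    let ?c = "\<lambda>i. if i \<in> spt g then v i $ k else 0"
    have "qform g ?c = (\<Sum>i\<in>UNIV. \<Sum>j\<in>spt g. g i j * ?c i * cnj (?c j))"
      unfolding qform_def by (intro sum.cong refl sum.mono_neutral_right) auto
    also have "\<dots> = (\<Sum>i\<in>spt g. \<Sum>j\<in>spt g. g i j * ?c i * cnj (?c j))"
      by (intro sum.mono_neutral_right) auto
    finally show ?thesis by (simp add: mult.assoc)
  qed
  have "ipH g v v = (\<Sum>i\<in>spt g. \<Sum>j\<in>spt g. \<Sum>k\<in>UNIV. g i j * (v i $ k * cnj (v j $ k)))"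
    by (simp add: ipH_def sum_distrib_left)
  also have "\<dots> = (\<Sum>i\<in>spt g. \<Sum>k\<in>UNIV. \<Sum>j\<in>spt g. g i j * (v i $ k * cnj (v j $ k)))"
    by (intro sum.cong refl sum.swap)
  also have "\<dots> = (\<Sum>k\<in>UNIV. \<Sum>i\<in>spt g. \<Sum>j\<in>spt g. g i j * (v i $ k * cnj (v j $ k)))"
    by (rule sum.swap)
  finally show ?thesis by (simp add: q)
qed

lemma ipH_self_real:
  assumes "is_kernel g"
  shows "Im (ipH g v v) = 0" "Re (ipH g v v) \<ge> 0"
proof -
  have k: "\<And>c. Im (qform g c) = 0 \<and> Re (qform g c) \<ge> 0" using assms unfolding is_kernel_def by blast
  show "Im (ipH g v v) = 0" unfolding ipH_self_qform Im_sum using k by simp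
  show "Re (ipH g v v) \<ge> 0" unfolding ipH_self_qform Re_sum using k by (simp add: sum_nonneg)
qed

lemma ipH_self_zero:
  fixes g :: "'n::finite \<Rightarrow> 'n \<Rightarrow> complex"
  assumes "is_kernel g" "v \<in> Hsub g UNIV" "Re (ipH g v v) = 0"
  shows "v = (\<lambda>i. 0)"
proof -
  let ?c = "\<lambda>k i. if i \<in> spt g then v i $ k else 0"
  have nn: "\<And>k. Re (qform g (?c k)) \<ge> 0" using ipH_self_real assms(1) unfolding is_kernel_def by blast
  have "(\<Sum>k\<in>UNIV. Re (qform g (?c k))) = 0" using assms(3) unfolding ipH_self_qform by (simp add: Re_sum)
  then have z: "\<And>k. Re (qform g (?c k)) = 0"
    using sum_nonneg_eq_0_iff[of UNIV "\<lambda>k. Re (qform g (?c k))"] nn by auto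
  have "\<And>k i. ?c k i = 0"
  proof (rule ccontr)
    fix k i
    have p: "\<And>c. (\<forall>i. i \<notin> spt g \<longrightarrow> c i = 0) \<and> (\<exists>i. c i \<noteq> 0) \<longrightarrow> Re (qform g c) > 0"
      using assms(1) unfolding is_kernel_def by blast
    assume "?c k i \<noteq> 0"
    then have "Re (qform g (?c k)) > 0" using p[of "?c k"] by auto
    then show False using z by simp
  qed
  then show ?thesis using assms(2) unfolding Hsub_def
    by (simp add: vec_eq_iff fun_eq_iff) (metis)
qed

definition subsp :: "('n::finite \<Rightarrow> 'n \<Rightarrow> complex) \<Rightarrow> ('n \<Rightarrow> complex^'m::finite) set \<Rightarrow> bool" where
  "subsp g W \<longleftrightarrow> W \<subseteq> Hsub g UNIV \<and> (\<lambda>i. 0) \<in> W \<and> (\<forall>v\<in>W. \<forall>w\<in>W. vadd v w \<in> W) \<and> (\<forall>c. \<forall>v\<in>W. vsc c v \<in> W)"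

definition hasproj :: "('n::finite \<Rightarrow> 'n \<Rightarrow> complex) \<Rightarrow> ('n \<Rightarrow> complex^'m::finite) set \<Rightarrow> bool" where
  "hasproj g W \<longleftrightarrow> (\<forall>v. \<exists>p\<in>W. \<forall>u\<in>W. ipH g (vsub v p) u = 0)"

lemma subsp_vsub: "subsp g W \<Longrightarrow> v \<in> W \<Longrightarrow> w \<in> W \<Longrightarrow> vsub v w \<in> W"
proof -
  assume a: "subsp g W" "v \<in> W" "w \<in> W"
  have "vsub v w = vadd v (vsc (-1) w)" by (simp add: vsub_def vadd_def vsc_def fun_eq_iff)
  then show ?thesis using a unfolding subsp_def by metis
qed

lemma projH_alt: "projH g W v = (THE p. p \<in> W \<and> (\<forall>u\<in>W. ipH g (vsub v p) u = 0))"
  by (simp add: projH_def vsub_def)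

lemma proj_uniq:
  assumes k: "is_kernel g" and W: "subsp g W" and p: "p \<in> W" "\<forall>u\<in>W. ipH g (vsub v p) u = 0"
    and q: "q \<in> W" "\<forall>u\<in>W. ipH g (vsub v q) u = 0"
  shows "p = q"
proof -
  let ?d = "vsub p q"
  have dW: "?d \<in> W" using subsp_vsub[OF W p(1) q(1)] .
  have "?d = vsub (vsub v q) (vsub v p)" by (simp add: vsub_def fun_eq_iff)
  then have "ipH g ?d ?d = ipH g (vsub v q) ?d - ipH g (vsub v p) ?d"
    by (metis ipH_vsub_left)
  also have "\<dots> = 0" using p q dW by simp
  finally have "?d = (\<lambda>i. 0)" using ipH_self_zero[OF k, of ?d] dW W unfolding subsp_def by auto
  then show ?thesis by (simp add: vsub_def fun_eq_iff vec_eq_iff)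
qed

lemma proj_spec:
  assumes k: "is_kernel g" and W: "subsp g W" "hasproj g W"
  shows "projH g W v \<in> W \<and> (\<forall>u\<in>W. ipH g (vsub v (projH g W v)) u = 0)"
proof -
  obtain p where p: "p \<in> W" "\<forall>u\<in>W. ipH g (vsub v p) u = 0" using W(2) unfolding hasproj_def by blast
  have "\<exists>!p. p \<in> W \<and> (\<forall>u\<in>W. ipH g (vsub v p) u = 0)"
    using p proj_uniq[OF k W(1)] by blast
  then show ?thesis unfolding projH_alt by (rule theI')
qed

lemma proj_in: "is_kernel g \<Longrightarrow> subsp g W \<Longrightarrow> hasproj g W \<Longrightarrow> projH g W v \<in> W"
  using proj_spec by blast
lemma proj_perp: "is_kernel g \<Longrightarrow> subsp g W \<Longrightarrow> hasproj g W \<Longrightarrow> u \<in> W \<Longrightarrow> ipH g (vsub v (projH g W v)) u = 0"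
  using proj_spec by blast

lemma proj_eq:
  assumes k: "is_kernel g" and W: "subsp g W" "hasproj g W"
    and p: "p \<in> W" "\<forall>u\<in>W. ipH g (vsub v p) u = 0"
  shows "projH g W v = p"
  using proj_uniq[OF k W(1) proj_in[OF k W] _ p] proj_perp[OF k W] by blast

lemma proj_add:
  assumes k: "is_kernel g" and W: "subsp g W" "hasproj g W"
  shows "projH g W (vadd v w) = vadd (projH g W v) (projH g W w)"
proof (rule proj_eq[OF k W])
  show "vadd (projH g W v) (projH g W w) \<in> W" using W proj_in[OF k W] unfolding subsp_def by blast
  have e: "vsub (vadd v w) (vadd (projH g W v) (projH g W w)) = vadd (vsub v (projH g W v)) (vsub w (projH g W w))"
    by (simp add: vsub_def vadd_def fun_eq_iff)
  show "\<forall>u\<in>W. ipH g (vsub (vadd v w) (vadd (projH g W v) (projH g W w))) u = 0"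
    unfolding e ipH_vadd_left using proj_perp[OF k W] by simp
qed

lemma proj_sc:
  assumes k: "is_kernel g" and W: "subsp g W" "hasproj g W"
  shows "projH g W (vsc c v) = vsc c (projH g W v)"
proof (rule proj_eq[OF k W])
  show "vsc c (projH g W v) \<in> W" using W proj_in[OF k W] unfolding subsp_def by blast
  have e: "vsub (vsc c v) (vsc c (projH g W v)) = vsc c (vsub v (projH g W v))"
    by (simp add: vsub_def vsc_def fun_eq_iff vector_ssub_ldistrib)
  show "\<forall>u\<in>W. ipH g (vsub (vsc c v) (vsc c (projH g W v))) u = 0"
    unfolding e ipH_vsc_left using proj_perp[OF k W] by simp
qed

lemma proj_sub:
  assumes k: "is_kernel g" and W: "subsp g W" "hasproj g W"
  shows "projH g W (vsub v w) = vsub (projH g W v) (projH g W w)"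
proof -
  have "vsub v w = vadd v (vsc (-1) w)" by (simp add: vsub_def vadd_def vsc_def fun_eq_iff)
  then have "projH g W (vsub v w) = vadd (projH g W v) (vsc (-1) (projH g W w))"
    using proj_add[OF k W] proj_sc[OF k W] by simp
  then show ?thesis by (simp add: vsub_def vadd_def vsc_def fun_eq_iff)
qed

lemma proj_id:
  assumes k: "is_kernel g" and W: "subsp g W" "hasproj g W" and v: "v \<in> W"
  shows "projH g W v = v"
  by (rule proj_eq[OF k W v]) (simp add: vsub_def ipH_zero_left)

lemma proj_zero:
  assumes k: "is_kernel g" and W: "subsp g W" "hasproj g W" and v: "\<forall>u\<in>W. ipH g v u = 0"
  shows "projH g W v = (\<lambda>i. 0)"
proof (rule proj_eq[OF k W])
  show "(\<lambda>i. 0) \<in> W" using W unfolding subsp_def by blast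
  have "vsub v (\<lambda>i. 0) = v" by (simp add: vsub_def)
  then show "\<forall>u\<in>W. ipH g (vsub v (\<lambda>i. 0)) u = 0" using v by simp
qed

lemma nrmH_sq: assumes "is_kernel g" shows "(nrmH g v)^2 = Re (ipH g v v)"
proof -
  have "Re (ipH g v v) \<ge> 0" by (rule ipH_self_real(2)[OF assms])
  then show ?thesis unfolding nrmH_def by simp
qed

lemma nrmH_nonneg: assumes "is_kernel g" shows "nrmH g v \<ge> 0"
  unfolding nrmH_def using ipH_self_real(2)[OF assms, of v] by simp

lemma Re_ipH_expand:
  assumes k: "is_kernel g"
  shows "Re (ipH g (vadd a b) (vadd a b)) = Re (ipH g a a) + 2 * Re (ipH g a b) + Re (ipH g b b)"
proof -
  have "Re (ipH g b a) = Re (ipH g a b)" using ipH_sym[OF k, of b a] by simp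
  then show ?thesis by (simp add: ipH_vadd_left ipH_vadd_right)
qed

lemma nrmH_vsc: "is_kernel g \<Longrightarrow> nrmH g (vsc c v) = cmod c * nrmH g v"
proof -
  assume k: "is_kernel g"
  have "ipH g (vsc c v) (vsc c v) = (c * cnj c) * ipH g v v" by (simp add: ipH_vsc_left ipH_vsc_right)
  also have "c * cnj c = of_real ((cmod c)^2)" by (metis complex_norm_square of_real_power)
  finally have "Re (ipH g (vsc c v) (vsc c v)) = (cmod c)^2 * Re (ipH g v v)"
    by (simp add: Re_complex_of_real)
  then show ?thesis unfolding nrmH_def by (simp add: real_sqrt_mult)
qed

lemma proj_norm_le:
  assumes k: "is_kernel g" and W: "subsp g W" "hasproj g W"
  shows "nrmH g (projH g W v) \<le> nrmH g v"
proof -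
  let ?p = "projH g W v"
  have e: "v = vadd ?p (vsub v ?p)" by (simp add: vsub_def vadd_def fun_eq_iff)
  have o: "ipH g ?p (vsub v ?p) = 0"
    using proj_perp[OF k W proj_in[OF k W], of v v] ipH_sym[OF k, of ?p "vsub v ?p"] by simp
  have "Re (ipH g v v) = Re (ipH g ?p ?p) + Re (ipH g (vsub v ?p) (vsub v ?p))"
    using Re_ipH_expand[OF k, of ?p "vsub v ?p"] o e by simp
  then have "(nrmH g ?p)^2 \<le> (nrmH g v)^2" unfolding nrmH_sq[OF k] using ipH_self_real(2)[OF k, of "vsub v ?p"] by simp
  then show ?thesis using nrmH_nonneg[OF k] power2_le_imp_le by blast
qed

lemma fun_linear_inj_surj:
  fixes \<Phi> :: "('n::finite \<Rightarrow> 'a::euclidean_space) \<Rightarrow> ('n \<Rightarrow> 'a)"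
  assumes add: "\<And>v w. \<Phi> (\<lambda>i. v i + w i) = (\<lambda>i. \<Phi> v i + \<Phi> w i)"
    and sc: "\<And>r v. \<Phi> (\<lambda>i. r *\<^sub>R v i) = (\<lambda>i. r *\<^sub>R \<Phi> v i)"
    and inj: "inj \<Phi>"
  shows "surj \<Phi>"
proof -
  define \<Psi> where "\<Psi> x = vec_lambda (\<Phi> (vec_nth x))" for x :: "'a^'n"
  have l: "linear \<Psi>"
  proof (rule linearI)
    fix x y :: "'a^'n"
    have "vec_nth (x + y) = (\<lambda>i. vec_nth x i + vec_nth y i)" by (simp add: fun_eq_iff)
    then show "\<Psi> (x + y) = \<Psi> x + \<Psi> y" unfolding \<Psi>_def by (simp add: add vec_eq_iff)
  next
    fix r :: real and x :: "'a^'n"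
    have "vec_nth (r *\<^sub>R x) = (\<lambda>i. r *\<^sub>R vec_nth x i)" by (simp add: fun_eq_iff)
    then show "\<Psi> (r *\<^sub>R x) = r *\<^sub>R \<Psi> x" unfolding \<Psi>_def by (simp add: sc vec_eq_iff)
  qed
  have "inj \<Psi>"
  proof (rule injI)
    fix x y assume "\<Psi> x = \<Psi> y"
    then have "\<Phi> (vec_nth x) = \<Phi> (vec_nth y)" unfolding \<Psi>_def by (metis vec_lambda_inverse UNIV_I)
    then have "vec_nth x = vec_nth y" using inj by (simp add: inj_eq)
    then show "x = y" by (simp add: vec_nth_inject)
  qed
  then have s: "surj \<Psi>" using linear_inj_imp_surj l by blast
  have "\<exists>x. \<Phi> x = t" for t
  proof -
    obtain x where "\<Psi> x = vec_lambda t" using s by (metis surjD)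
    then have "\<forall>i. \<Phi> (vec_nth x) i = t i" unfolding \<Psi>_def by (metis vec_lambda_beta)
    then have "\<Phi> (vec_nth x) = t" by (simp add: fun_eq_iff)
    then show ?thesis by blast
  qed
  then show ?thesis by (metis surjI)
qed

lemma scaleR_cvec: "r *\<^sub>R (x::complex^'m::finite) = of_real r *s x"
unfolding vec_eq_iff proof
  fix i show "(r *\<^sub>R x) $ i = (of_real r *s x) $ i"
    by (simp only: vector_scaleR_component vector_smult_component) (simp add: scaleR_conv_of_real)
qed

lemma conj_expand_one:
  fixes F :: "('n \<Rightarrow> complex^'m::finite) \<Rightarrow> complex"
  assumes add: "\<And>a b. F (vadd a b) = F a + F b" and sc: "\<And>c a. F (vsc c a) = cnj c * F a"
  shows "F (\<lambda>j. if j = i then (\<chi> k. if k \<in> K then x $ k else 0) else 0)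
       = (\<Sum>k\<in>K. cnj (x $ k) * F (\<lambda>j. if j = i then axis k 1 else 0))"
proof -
  have z: "F (\<lambda>j. 0) = 0"
  proof -
    have "(\<lambda>j. 0::complex^'m) = vsc 0 (\<lambda>j. 0)" by (simp add: vsc_def)
    then show ?thesis using sc[of 0 "\<lambda>j. 0"] by (metis mult_zero_left complex_cnj_zero)
  qed
  have "finite K" by simp
  then show ?thesis
  proof (induction K rule: finite_induct)
    case empty
    have "(\<lambda>j. if j = i then (\<chi> k. if k \<in> {} then x $ k else 0) else (0::complex^'m)) = (\<lambda>j. 0)"
      by (simp add: fun_eq_iff vec_eq_iff)
    then show ?case using z by simp
  next
    case (insert a K)
    have "(\<lambda>j. if j = i then (\<chi> k. if k \<in> insert a K then x $ k else 0) else 0)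
       = vadd (vsc (x $ a) (\<lambda>j. if j = i then axis a 1 else 0)) (\<lambda>j. if j = i then (\<chi> k. if k \<in> K then x $ k else 0) else 0)"
      using insert(2) by (auto simp: fun_eq_iff vec_eq_iff vadd_def vsc_def axis_def)
    then show ?case using insert add sc by simp
  qed
qed

lemma conj_expand:
  fixes F :: "('n::finite \<Rightarrow> complex^'m::finite) \<Rightarrow> complex"
  assumes add: "\<And>a b. F (vadd a b) = F a + F b" and sc: "\<And>c a. F (vsc c a) = cnj c * F a"
  shows "F (\<lambda>i. if i \<in> A then h i else 0)
       = (\<Sum>i\<in>A. \<Sum>k\<in>UNIV. cnj (h i $ k) * F (\<lambda>j. if j = i then axis k 1 else 0))"
proof -
  have z: "F (\<lambda>j. 0) = 0"
  proof -
    have "(\<lambda>j. 0::complex^'m) = vsc 0 (\<lambda>j. 0)" by (simp add: vsc_def)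
    then show ?thesis using sc[of 0 "\<lambda>j. 0"] by (metis mult_zero_left complex_cnj_zero)
  qed
  have one: "F (\<lambda>j. if j = i then h i else 0) = (\<Sum>k\<in>UNIV. cnj (h i $ k) * F (\<lambda>j. if j = i then axis k 1 else 0))" for i
  proof -
    have "(\<lambda>j. if j = i then h i else 0) = (\<lambda>j. if j = i then (\<chi> k. if k \<in> UNIV then h i $ k else 0) else 0)"
      by (simp add: fun_eq_iff vec_eq_iff)
    then show ?thesis using conj_expand_one[OF add sc, of i UNIV "h i"] by simp
  qed
  have "finite A" by simp
  then show ?thesis
  proof (induction A rule: finite_induct)
    case empty
    then show ?case using z by simp
  next
    case (insert a A)
    have "(\<lambda>i. if i \<in> insert a A then h i else 0) = vadd (\<lambda>j. if j = a then h a else 0) (\<lambda>i. if i \<in> A then h i else 0)"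
      using insert(2) by (auto simp: fun_eq_iff vadd_def)
    then show ?case using insert add one by simp
  qed
qed

lemma LM:
  fixes g :: "'n::finite \<Rightarrow> 'n \<Rightarrow> complex" and B :: "('n \<Rightarrow> complex^'m::finite) \<Rightarrow> ('n \<Rightarrow> complex^'m) \<Rightarrow> complex"
    and f :: "('n \<Rightarrow> complex^'m) \<Rightarrow> complex"
  assumes Badd: "\<And>y1 y2 h. B (vadd y1 y2) h = B y1 h + B y2 h"
    and Bsc: "\<And>c y h. B (vsc c y) h = c * B y h"
    and Badd2: "\<And>y h1 h2. B y (vadd h1 h2) = B y h1 + B y h2"
    and Bsc2: "\<And>c y h. B y (vsc c h) = cnj c * B y h"
    and coer: "\<And>y. y \<in> Hsub g J \<Longrightarrow> B y y = 0 \<Longrightarrow> y = (\<lambda>i. 0)"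
    and fadd: "\<And>h1 h2. f (vadd h1 h2) = f h1 + f h2"
    and fsc: "\<And>c h. f (vsc c h) = cnj c * f h"
  shows "\<exists>y\<in>Hsub g J. \<forall>h\<in>Hsub g J. B y h = f h"
proof -
  define J' where "J' = J \<inter> spt g"
  define e where "e (i::'n) (k::'m) = (\<lambda>j. if j = i then axis k 1 else (0::complex^'m))" for i k
  define res where "res y = (\<lambda>i. if i \<in> J' then y i else 0)" for y :: "'n \<Rightarrow> complex^'m"
  define \<Phi> where "\<Phi> y = (\<lambda>i. if i \<in> J' then (\<chi> k. B (res y) (e i k)) else y i)" for y
  have HsubJ: "Hsub g J = {v. \<forall>i. i \<notin> J' \<longrightarrow> v i = 0}" unfolding Hsub_def J'_def by simp
  have resH: "y \<in> Hsub g J \<Longrightarrow> res y = y" for y unfolding HsubJ res_def by (auto simp: fun_eq_iff)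
  have expB: "B y (res h) = (\<Sum>i\<in>J'. \<Sum>k\<in>UNIV. cnj (h i $ k) * B y (e i k))" for y h
    unfolding res_def e_def by (rule conj_expand) (auto simp: Badd2 Bsc2)
  have expf: "f (res h) = (\<Sum>i\<in>J'. \<Sum>k\<in>UNIV. cnj (h i $ k) * f (e i k))" for h
    unfolding res_def e_def by (rule conj_expand) (auto simp: fadd fsc)
  have res_add: "res (\<lambda>i. v i + w i) = vadd (res v) (res w)" for v w
    by (auto simp: res_def vadd_def fun_eq_iff)
  have res_sc: "res (\<lambda>i. r *\<^sub>R v i) = vsc (of_real r) (res v)" for r v
    by (auto simp: res_def vsc_def fun_eq_iff scaleR_cvec)
  have \<Phi>add: "\<Phi> (\<lambda>i. v i + w i) = (\<lambda>i. \<Phi> v i + \<Phi> w i)" for v w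
    unfolding \<Phi>_def res_add by (auto simp: fun_eq_iff vec_eq_iff Badd)
  have \<Phi>sc: "\<Phi> (\<lambda>i. r *\<^sub>R v i) = (\<lambda>i. r *\<^sub>R \<Phi> v i)" for r v
    unfolding \<Phi>_def res_sc by (auto simp: fun_eq_iff vec_eq_iff Bsc scaleR_cvec)
  have \<Phi>0: "\<Phi> y = (\<lambda>i. 0) \<Longrightarrow> y = (\<lambda>i. 0)" for y
  proof -
    assume a: "\<Phi> y = (\<lambda>i. 0)"
    have out: "\<And>i. i \<notin> J' \<Longrightarrow> y i = 0" using a unfolding \<Phi>_def by (metis (full_types))
    then have yH: "y \<in> Hsub g J" unfolding HsubJ by simp
    have "\<And>i k. i \<in> J' \<Longrightarrow> B (res y) (e i k) = 0"
      using a unfolding \<Phi>_def by (metis vec_lambda_beta zero_index)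
    then have "B y (res y) = 0" unfolding expB using resH[OF yH] by simp
    then have "B y y = 0" using resH[OF yH] by simp
    then show ?thesis using coer[OF yH] by simp
  qed
  have "inj \<Phi>"
  proof (rule injI)
    fix v w assume vw: "\<Phi> v = \<Phi> w"
    have e: "\<Phi> (\<lambda>i. v i + (-1) *\<^sub>R w i) = (\<lambda>i. \<Phi> v i + (-1) *\<^sub>R \<Phi> w i)" by (simp only: \<Phi>add \<Phi>sc)
    have "\<Phi> (\<lambda>i. v i + (-1) *\<^sub>R w i) = (\<lambda>i. 0)" unfolding e vw by simp
    then have "(\<lambda>i. v i + (-1) *\<^sub>R w i) = (\<lambda>i. 0)" by (rule \<Phi>0)
    then show "v = w" by (simp add: fun_eq_iff)
  qed
  then have "surj \<Phi>" using fun_linear_inj_surj[of \<Phi>] \<Phi>add \<Phi>sc by blast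
  then obtain y where y: "\<Phi> y = (\<lambda>i. if i \<in> J' then (\<chi> k. f (e i k)) else 0)" by (metis surjD)
  have out: "\<And>i. i \<notin> J' \<Longrightarrow> y i = 0" using y unfolding \<Phi>_def by (metis (full_types))
  then have yH: "y \<in> Hsub g J" unfolding HsubJ by simp
  have be: "\<And>i k. i \<in> J' \<Longrightarrow> B y (e i k) = f (e i k)"
  proof -
    fix i k assume i: "i \<in> J'"
    have "\<Phi> y i $ k = f (e i k)" using y i by simp
    then show "B y (e i k) = f (e i k)" using i resH[OF yH] unfolding \<Phi>_def by simp
  qed
  show ?thesis
  proof (intro bexI[OF _ yH] ballI)
    fix h :: "'n \<Rightarrow> complex^'m" assume h: "h \<in> Hsub g J"
    have "B y h = B y (res h)" using resH[OF h] by simp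
    also have "\<dots> = f (res h)" unfolding expB expf using be by simp
    also have "\<dots> = f h" using resH[OF h] by simp
    finally show "B y h = f h" .
  qed
qed

lemma Hsub_mono: "J \<subseteq> J' \<Longrightarrow> Hsub g J \<subseteq> Hsub g J'"
  unfolding Hsub_def by auto

lemma subsp_Hsub: "subsp g (Hsub g J)"
  unfolding subsp_def Hsub_def vadd_def vsc_def by auto

lemma hasproj_Hsub:
  assumes k: "is_kernel g"
  shows "hasproj g (Hsub g J)"
  unfolding hasproj_def
proof
  fix v
  have "\<exists>y\<in>Hsub g J. \<forall>h\<in>Hsub g J. ipH g y h = ipH g v h"
  proof (rule LM)
    fix y assume y: "y \<in> Hsub g J" "ipH g y y = 0"
    show "y = (\<lambda>i. 0)" using ipH_self_zero[OF k, of y] y Hsub_mono[of J UNIV g] by auto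
  qed (auto simp: ipH_vadd_left ipH_vadd_right ipH_vsc_left ipH_vsc_right)
  then obtain p where p: "p \<in> Hsub g J" "\<forall>h\<in>Hsub g J. ipH g p h = ipH g v h" by blast
  then show "\<exists>p\<in>Hsub g J. \<forall>u\<in>Hsub g J. ipH g (vsub v p) u = 0"
    by (intro bexI[of _ p]) (auto simp: ipH_vsub_left)
qed

lemma subsp_Hcomp:
  fixes g :: "'n::finite \<Rightarrow> 'n \<Rightarrow> complex"
  assumes k: "is_kernel g"
  shows "subsp g (Hcomp g I0 I1 :: ('n \<Rightarrow> complex^'m::finite) set)"
  unfolding subsp_def
proof (intro conjI ballI allI)
  show "Hcomp g I0 I1 \<subseteq> Hsub g UNIV" unfolding Hcomp_def using Hsub_mono[of I1 UNIV g] by auto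
  show "(\<lambda>i. 0) \<in> Hcomp g I0 I1" unfolding Hcomp_def using subsp_Hsub[of g I1] unfolding subsp_def
    by (auto simp: ipH_zero_left)
  fix v w :: "'n \<Rightarrow> complex^'m" assume "v \<in> Hcomp g I0 I1" "w \<in> Hcomp g I0 I1"
  then show "vadd v w \<in> Hcomp g I0 I1" unfolding Hcomp_def using subsp_Hsub[of g I1] unfolding subsp_def
    by (auto simp: ipH_vadd_left)
next
  fix c and v :: "'n \<Rightarrow> complex^'m" assume "v \<in> Hcomp g I0 I1"
  then show "vsc c v \<in> Hcomp g I0 I1" unfolding Hcomp_def using subsp_Hsub[of g I1] unfolding subsp_def
    by (auto simp: ipH_vsc_left)
qed

lemma hasproj_Hcomp:
  fixes g :: "'n::finite \<Rightarrow> 'n \<Rightarrow> complex"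
  assumes k: "is_kernel g"
  shows "hasproj g (Hcomp g I0 I1 :: ('n \<Rightarrow> complex^'m::finite) set)"
  unfolding hasproj_def
proof
  fix v :: "'n \<Rightarrow> complex^'m"
  let ?P1 = "projH g (Hsub g I1)" and ?P2 = "projH g (Hsub g (I1 - I0))"
  have S1: "subsp g (Hsub g I1)" "hasproj g (Hsub g I1)" using subsp_Hsub hasproj_Hsub[OF k] by auto
  have S2: "subsp g (Hsub g (I1 - I0))" "hasproj g (Hsub g (I1 - I0))" using subsp_Hsub hasproj_Hsub[OF k] by auto
  define p where "p = vsub (?P1 v) (?P2 (?P1 v))"
  have a: "?P1 v \<in> Hsub g I1" using proj_in[OF k S1] .
  have b: "?P2 (?P1 v) \<in> Hsub g I1" using proj_in[OF k S2] Hsub_mono[of "I1 - I0" I1 g] by blast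
  have pin: "p \<in> Hcomp g I0 I1"
    unfolding Hcomp_def p_def using subsp_vsub[OF S1(1) a b] proj_perp[OF k S2] by auto
  have e: "vsub v p = vadd (vsub v (?P1 v)) (?P2 (?P1 v))" unfolding p_def
    by (simp add: vsub_def vadd_def fun_eq_iff)
  have "\<forall>u\<in>Hcomp g I0 I1. ipH g (vsub v p) u = 0"
  proof
    fix u assume u: "u \<in> (Hcomp g I0 I1 :: ('n \<Rightarrow> complex^'m) set)"
    have "ipH g (vsub v (?P1 v)) u = 0" using proj_perp[OF k S1] u unfolding Hcomp_def by blast
    moreover have "ipH g u (?P2 (?P1 v)) = 0" using u proj_in[OF k S2] unfolding Hcomp_def by blast
    then have "ipH g (?P2 (?P1 v)) u = 0" using ipH_sym[OF k, of "?P2 (?P1 v)" u] by simp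
    ultimately show "ipH g (vsub v p) u = 0" unfolding e ipH_vadd_left by simp
  qed
  then show "\<exists>p\<in>Hcomp g I0 I1. \<forall>u\<in>Hcomp g I0 I1. ipH g (vsub v p) u = 0" using pin by blast
qed

lemma cont_nth[continuous_intros]:
  fixes f :: "'a::topological_space \<Rightarrow> 'b::real_normed_vector^'c::finite"
  assumes "continuous_on S f" shows "continuous_on S (\<lambda>x. f x $ i)"
proof -
  have "bounded_linear (\<lambda>x::'b^'c. x $ i)" by (rule bounded_linear_vec_nth)
  from bounded_linear.continuous_on[OF this assms] show ?thesis .
qed

lemma norm_axis_c: "norm (axis i (1::complex) :: complex^'n::finite) = 1"
proof -
  have "(\<Sum>k\<in>UNIV. (norm (axis i (1::complex) $ k))^2) = (\<Sum>k\<in>UNIV. if k = i then 1 else (0::real))"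
    by (rule sum.cong) (auto simp: axis_def)
  then show ?thesis unfolding norm_vec_def L2_set_def by simp
qed

lemma qform_scale: "qform g (\<lambda>i. a * c i) = (a * cnj a) * qform g c"
  unfolding qform_def by (simp add: sum_distrib_left mult_ac)

lemma qform_zero: "qform g (\<lambda>i. 0) = 0"
  unfolding qform_def by simp

lemma qform_bounds:
  fixes g :: "'n::finite \<Rightarrow> 'n \<Rightarrow> complex"
  assumes k: "is_kernel g"
  shows "\<exists>\<delta> \<Delta>. \<delta> > 0 \<and> \<Delta> \<ge> 0 \<and> (\<forall>c. (\<forall>i. i \<notin> spt g \<longrightarrow> c i = 0) \<longrightarrow>
     \<delta> * (\<Sum>i\<in>UNIV. (cmod (c i))^2) \<le> Re (qform g c) \<and> Re (qform g c) \<le> \<Delta> * (\<Sum>i\<in>UNIV. (cmod (c i))^2))"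
proof -
  have pos: "\<And>c. (\<forall>i. i \<notin> spt g \<longrightarrow> c i = 0) \<and> (\<exists>i. c i \<noteq> 0) \<longrightarrow> Re (qform g c) > 0"
    using k unfolding is_kernel_def by blast
  define S where "S = sphere (0::complex^'n) 1 \<inter> (\<Inter>i\<in>- spt g. {x. x $ i = 0})"
  define f where "f x = Re (qform g (vec_nth x))" for x :: "complex^'n"
  have cS: "compact S" unfolding S_def
    by (intro compact_Int_closed compact_sphere closed_INT ballI closed_Collect_eq continuous_intros)
  have cf: "continuous_on S f" unfolding f_def qform_def by (intro continuous_intros)
  have nrm: "norm (vec_lambda c) ^ 2 = (\<Sum>i\<in>UNIV. (cmod (c i))^2)" for c :: "'n \<Rightarrow> complex"
    unfolding norm_vec_def L2_set_def by (simp add: sum_nonneg)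
  show ?thesis
  proof (cases "S = {}")
    case True
    have "spt g = {}"
    proof (rule ccontr)
      assume "spt g \<noteq> {}" then obtain i where i: "i \<in> spt g" by blast
      have "(axis i 1 :: complex^'n) \<in> S" unfolding S_def using i norm_axis_c[of i] by (auto simp: axis_def)
      then show False using True by blast
    qed
    then have z: "\<And>c. (\<forall>i. i \<notin> spt g \<longrightarrow> c i = 0) \<Longrightarrow> c = (\<lambda>i. 0)" by auto
    have "\<forall>c. (\<forall>i. i \<notin> spt g \<longrightarrow> c i = 0) \<longrightarrow> 1 * (\<Sum>i\<in>UNIV. (cmod (c i))^2) \<le> Re (qform g c) \<and> Re (qform g c) \<le> 0 * (\<Sum>i\<in>UNIV. (cmod (c i))^2)"
    proof (intro allI impI)
      fix c :: "'n \<Rightarrow> complex" assume "\<forall>i. i \<notin> spt g \<longrightarrow> c i = 0"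
      then have "c = (\<lambda>i. 0)" by (rule z)
      then show "1 * (\<Sum>i\<in>UNIV. (cmod (c i))^2) \<le> Re (qform g c) \<and> Re (qform g c) \<le> 0 * (\<Sum>i\<in>UNIV. (cmod (c i))^2)"
        by (simp add: qform_zero)
    qed
    then show ?thesis by (intro exI[of _ 1] exI[of _ 0]) simp
  next
    case False
    obtain x0 where x0: "x0 \<in> S" "\<forall>y\<in>S. f x0 \<le> f y" using continuous_attains_inf[OF cS False cf] by blast
    obtain x1 where x1: "x1 \<in> S" "\<forall>y\<in>S. f y \<le> f x1" using continuous_attains_sup[OF cS False cf] by blast
    have "f x0 > 0"
    proof -
      have "x0 \<noteq> 0" using x0(1) unfolding S_def by auto
      then obtain i where "x0 $ i \<noteq> 0" by (auto simp: vec_eq_iff)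
      then show ?thesis unfolding f_def using pos[of "vec_nth x0"] x0(1) unfolding S_def by auto
    qed
    moreover have "f x1 \<ge> 0" using k unfolding is_kernel_def f_def by blast
    moreover have "f x0 * (\<Sum>i\<in>UNIV. (cmod (c i))^2) \<le> Re (qform g c) \<and> Re (qform g c) \<le> f x1 * (\<Sum>i\<in>UNIV. (cmod (c i))^2)"
      if c: "\<forall>i. i \<notin> spt g \<longrightarrow> c i = 0" for c
    proof (cases "c = (\<lambda>i. 0)")
      case True then show ?thesis by (simp add: qform_zero)
    next
      case False
      define s where "s = (\<Sum>i\<in>UNIV. (cmod (c i))^2)"
      have s0: "s > 0"
      proof -
        obtain j where "c j \<noteq> 0" using False by auto
        then have "(cmod (c j))^2 > 0" by simp
        moreover have "(cmod (c j))^2 \<le> s" unfolding s_def by (rule member_le_sum) auto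
        ultimately show ?thesis by linarith
      qed
      define t where "t = 1 / sqrt s"
      define y where "y = vec_lambda (\<lambda>i. complex_of_real t * c i)"
      have ny: "norm y ^ 2 = t^2 * s" unfolding y_def nrm s_def
        by (simp add: norm_mult power_mult_distrib sum_distrib_left)
      have "t^2 * s = 1" unfolding t_def using s0 by (simp add: power_divide)
      then have ny1: "norm y ^ 2 = 1" using ny by simp
      have "norm y = sqrt (norm y ^ 2)" by simp
      then have "norm y = 1" using ny1 by simp
      then have yS: "y \<in> S" unfolding S_def y_def using c by auto
      have vy: "vec_nth y = (\<lambda>i. complex_of_real t * c i)" unfolding y_def by (simp add: fun_eq_iff)
      have fy: "f y = t^2 * Re (qform g c)" unfolding f_def vy qform_scale
        by (simp add: power2_eq_square)
      have "f x0 \<le> t^2 * Re (qform g c)" "t^2 * Re (qform g c) \<le> f x1" using x0(2) x1(2) yS fy by auto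
      then have "f x0 * s \<le> (t^2 * Re (qform g c)) * s" "(t^2 * Re (qform g c)) * s \<le> f x1 * s"
        using s0 by (auto intro: mult_right_mono)
      moreover have "(t^2 * Re (qform g c)) * s = Re (qform g c)" using \<open>t^2 * s = 1\<close>
        by (metis mult.commute mult.left_commute mult_1_right)
      ultimately have "f x0 * s \<le> Re (qform g c) \<and> Re (qform g c) \<le> f x1 * s" by simp
      then show ?thesis unfolding s_def by simp
    qed
    ultimately show ?thesis by blast
  qed
qed

definition Emsr :: "('n::finite \<Rightarrow> 'n \<Rightarrow> complex) \<Rightarrow> ('n \<Rightarrow> complex^'m::finite) \<Rightarrow> real" where
  "Emsr g v = (\<Sum>i\<in>spt g. (norm (v i))^2)"

lemma norm_sq_cvec: "(norm (x::complex^'m::finite))^2 = (\<Sum>k\<in>UNIV. (cmod (x $ k))^2)"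
  unfolding norm_vec_def L2_set_def by (simp add: sum_nonneg)

lemma nrmH_bounds:
  fixes g :: "'n::finite \<Rightarrow> 'n \<Rightarrow> complex"
  assumes k: "is_kernel g"
  shows "\<exists>\<delta> \<Delta>. \<delta> > 0 \<and> \<Delta> \<ge> 0 \<and> (\<forall>v::'n \<Rightarrow> complex^'m::finite.
     \<delta> * Emsr g v \<le> (nrmH g v)^2 \<and> (nrmH g v)^2 \<le> \<Delta> * Emsr g v)"
proof -
  obtain \<delta> \<Delta> where d: "\<delta> > 0" "\<Delta> \<ge> 0" and b: "\<And>c. (\<forall>i. i \<notin> spt g \<longrightarrow> c i = 0) \<Longrightarrow>
     \<delta> * (\<Sum>i\<in>UNIV. (cmod (c i))^2) \<le> Re (qform g c) \<and> Re (qform g c) \<le> \<Delta> * (\<Sum>i\<in>UNIV. (cmod (c i))^2)"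
    using qform_bounds[OF k] by blast
  have "\<delta> * Emsr g v \<le> (nrmH g v)^2 \<and> (nrmH g v)^2 \<le> \<Delta> * Emsr g v" for v :: "'n \<Rightarrow> complex^'m"
  proof -
    define c where "c k = (\<lambda>i. if i \<in> spt g then v i $ k else 0)" for k
    have e: "(nrmH g v)^2 = (\<Sum>k\<in>UNIV. Re (qform g (c k)))"
      unfolding nrmH_sq[OF k] ipH_self_qform c_def by (simp add: Re_sum)
    have E: "Emsr g v = (\<Sum>k\<in>UNIV. \<Sum>i\<in>UNIV. (cmod (c k i))^2)"
    proof -
      have "(\<Sum>k\<in>UNIV. \<Sum>i\<in>UNIV. (cmod (c k i))^2) = (\<Sum>i\<in>UNIV. \<Sum>k\<in>UNIV. (cmod (c k i))^2)"
        by (rule sum.swap)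
      also have "\<dots> = (\<Sum>i\<in>spt g. \<Sum>k\<in>UNIV. (cmod (c k i))^2)"
        by (rule sum.mono_neutral_right) (auto simp: c_def)
      also have "\<dots> = Emsr g v" unfolding Emsr_def norm_sq_cvec c_def by simp
      finally show ?thesis by simp
    qed
    have "\<And>k. \<delta> * (\<Sum>i\<in>UNIV. (cmod (c k i))^2) \<le> Re (qform g (c k)) \<and> Re (qform g (c k)) \<le> \<Delta> * (\<Sum>i\<in>UNIV. (cmod (c k i))^2)"
      by (rule b) (simp add: c_def)
    then have "(\<Sum>k\<in>UNIV. \<delta> * (\<Sum>i\<in>UNIV. (cmod (c k i))^2)) \<le> (\<Sum>k\<in>UNIV. Re (qform g (c k)))"
      "(\<Sum>k\<in>UNIV. Re (qform g (c k))) \<le> (\<Sum>k\<in>UNIV. \<Delta> * (\<Sum>i\<in>UNIV. (cmod (c k i))^2))"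
      by (auto intro: sum_mono)
    then show ?thesis unfolding e E sum_distrib_left by simp
  qed
  then show ?thesis using d by blast
qed

lemma Tmap_vadd: "Tmap z (vadd v w) = vadd (Tmap z v) (Tmap z w)"
  by (simp add: Tmap_def vadd_def fun_eq_iff matrix_vector_right_distrib)
lemma Tmap_vsub: "Tmap z (vsub v w) = vsub (Tmap z v) (Tmap z w)"
  by (simp add: Tmap_def vsub_def fun_eq_iff matrix_vector_mult_diff_distrib)
lemma Tmap_vsc: "Tmap z (vsc c v) = vsc c (Tmap z v)"
  by (simp add: Tmap_def vsc_def fun_eq_iff vec.scale)
lemma Tmap_zero: "Tmap z (\<lambda>i. 0) = (\<lambda>i. 0)"
  by (simp add: Tmap_def)
lemma Tmap_Hsub: "v \<in> Hsub g J \<Longrightarrow> Tmap z v \<in> Hsub g J"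
  by (simp add: Tmap_def Hsub_def)

lemma norm_mv: "norm ((A::complex^'m::finite^'n::finite) *v (x::complex^'m::finite)) \<le> (\<Sum>k\<in>UNIV. \<Sum>j\<in>UNIV. cmod (A $ k $ j)) * norm x"
proof -
  have "norm (A *v x) \<le> (\<Sum>k\<in>UNIV. norm ((A *v x) $ k))"
    unfolding norm_vec_def by (rule L2_set_le_sum) simp
  also have "\<dots> \<le> (\<Sum>k\<in>UNIV. \<Sum>j\<in>UNIV. cmod (A $ k $ j) * norm x)"
  proof (rule sum_mono)
    fix k :: 'n
    have "norm ((A *v x) $ k) = cmod (\<Sum>j\<in>UNIV. A $ k $ j * x $ j)" by (simp add: matrix_vector_mult_def)
    also have "\<dots> \<le> (\<Sum>j\<in>UNIV. cmod (A $ k $ j * x $ j))" by (rule norm_sum)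
    also have "\<dots> \<le> (\<Sum>j\<in>UNIV. cmod (A $ k $ j) * norm x)"
    proof (rule sum_mono)
      fix j
      have "norm (x $ j) \<le> norm x" by (rule Finite_Cartesian_Product.norm_nth_le)
      then have "cmod (A $ k $ j) * cmod (x $ j) \<le> cmod (A $ k $ j) * norm x" by (rule mult_left_mono) simp
      then show "cmod (A $ k $ j * x $ j) \<le> cmod (A $ k $ j) * norm x" by (simp add: norm_mult)
    qed
    finally show "norm ((A *v x) $ k) \<le> (\<Sum>j\<in>UNIV. cmod (A $ k $ j) * norm x)" .
  qed
  finally show ?thesis by (simp add: sum_distrib_right)
qed

lemma Tmap_bound:
  fixes g :: "'n::finite \<Rightarrow> 'n \<Rightarrow> complex" and z :: "'n \<Rightarrow> complex^'m::finite^'m"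
  assumes k: "is_kernel g"
  shows "\<exists>K\<ge>0. \<forall>v. nrmH g (Tmap z v) \<le> K * nrmH g v"
proof -
  obtain \<delta> \<Delta> where d: "\<delta> > 0" "\<Delta> \<ge> 0" and b: "\<And>v::'n \<Rightarrow> complex^'m.
     \<delta> * Emsr g v \<le> (nrmH g v)^2 \<and> (nrmH g v)^2 \<le> \<Delta> * Emsr g v"
    using nrmH_bounds[OF k] by blast
  define Mi where "Mi i = (\<Sum>k\<in>UNIV. \<Sum>j\<in>UNIV. cmod (adjm (z i) $ k $ j))" for i
  define M where "M = (\<Sum>i\<in>UNIV. Mi i)"
  have Mi0: "Mi i \<ge> 0" for i unfolding Mi_def by (intro sum_nonneg) auto
  have MiM: "Mi i \<le> M" for i unfolding M_def by (rule member_le_sum) (auto simp: Mi0)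
  have M0: "M \<ge> 0" using Mi0 MiM order_trans by blast
  have E: "Emsr g (Tmap z v) \<le> M^2 * Emsr g v" for v
  proof -
    have "(norm (Tmap z v i))^2 \<le> M^2 * (norm (v i))^2" for i
    proof -
      have "norm (Tmap z v i) \<le> Mi i * norm (v i)" unfolding Tmap_def Mi_def by (rule norm_mv)
      also have "\<dots> \<le> M * norm (v i)" using MiM by (simp add: mult_right_mono)
      finally have "norm (Tmap z v i) \<le> M * norm (v i)" .
      then have "(norm (Tmap z v i))^2 \<le> (M * norm (v i))^2" by (rule power_mono) simp
      then show ?thesis by (simp add: power_mult_distrib)
    qed
    then show ?thesis unfolding Emsr_def sum_distrib_left by (intro sum_mono) auto
  qed
  define K where "K = sqrt (\<Delta> * M^2 / \<delta>)"
  have K0: "K \<ge> 0" unfolding K_def using d by simp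
  have "nrmH g (Tmap z v) \<le> K * nrmH g v" for v
  proof -
    have "(nrmH g (Tmap z v))^2 \<le> \<Delta> * Emsr g (Tmap z v)" using b by blast
    also have "\<dots> \<le> \<Delta> * (M^2 * Emsr g v)" using E d by (simp add: mult_left_mono)
    also have "\<dots> = (\<Delta> * M^2 / \<delta>) * (\<delta> * Emsr g v)" using d by simp
    also have "\<dots> \<le> (\<Delta> * M^2 / \<delta>) * (nrmH g v)^2" using b d by (intro mult_left_mono) auto
    also have "\<dots> = (K * nrmH g v)^2" unfolding K_def using d by (simp add: power_mult_distrib)
    finally have "(nrmH g (Tmap z v))^2 \<le> (K * nrmH g v)^2" .
    then show ?thesis using K0 nrmH_nonneg[OF k] power2_le_imp_le by (metis mult_nonneg_nonneg)
  qed
  then show ?thesis using K0 by blast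
qed

lemma nrmH_zero: "nrmH g (\<lambda>i. 0) = 0"
  unfolding nrmH_def by (simp add: ipH_zero_left)

lemma opn_le:
  assumes k: "is_kernel g" and V: "subsp g V" and K: "K \<ge> 0" "\<forall>v. nrmH g (T v) \<le> K * nrmH g v"
    and hom: "\<forall>c v. T (vsc c v) = vsc c (T v)" and v: "v \<in> V"
  shows "nrmH g (T v) \<le> opnorm g V T * nrmH g v"
proof (cases "nrmH g v = 0")
  case True
  then have "nrmH g (T v) \<le> 0" using K(2) by (metis mult_zero_right)
  then show ?thesis using True by simp
next
  case False
  define n where "n = nrmH g v"
  have n0: "n > 0" using False nrmH_nonneg[OF k, of v] unfolding n_def by simp
  define v' where "v' = vsc (complex_of_real (1/n)) v"
  have v'V: "v' \<in> V" using V v unfolding subsp_def v'_def by blast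
  have nv': "nrmH g v' = 1" unfolding v'_def nrmH_vsc[OF k] n_def[symmetric] using n0 by (simp add: norm_divide)
  have bdd: "bdd_above {nrmH g (T v) | v. v \<in> V \<and> nrmH g v \<le> 1}"
  proof (rule bdd_aboveI)
    fix x assume "x \<in> {nrmH g (T v) | v. v \<in> V \<and> nrmH g v \<le> 1}"
    then obtain w where w: "x = nrmH g (T w)" "nrmH g w \<le> 1" by blast
    have "K * nrmH g w \<le> K" using w(2) K(1) by (rule mult_left_le)
    then show "x \<le> K" using K(2) w(1) by (metis order_trans)
  qed
  have "nrmH g (T v') \<le> opnorm g V T" unfolding opnorm_def
    by (rule cSup_upper[OF _ bdd]) (use v'V nv' in auto)
  moreover have "nrmH g (T v') = nrmH g (T v) / n" unfolding v'_def hom[rule_format] nrmH_vsc[OF k] using n0 by (simp add: norm_divide)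
  ultimately show ?thesis using n0 unfolding n_def[symmetric] by (simp add: divide_le_eq)
qed

lemma opn_least:
  assumes k: "is_kernel g" and V: "subsp g V" and c: "c \<ge> 0" "\<forall>v\<in>V. nrmH g (T v) \<le> c * nrmH g v"
  shows "opnorm g V T \<le> c"
  unfolding opnorm_def
proof (rule cSup_least)
  have "(\<lambda>i. 0) \<in> V" using V unfolding subsp_def by blast
  then have "\<exists>v. nrmH g (T (\<lambda>i. 0)) = nrmH g (T v) \<and> v \<in> V \<and> nrmH g v \<le> 1"
    by (intro exI[of _ "\<lambda>i. 0"]) (simp add: nrmH_zero)
  then have "nrmH g (T (\<lambda>i. 0)) \<in> {nrmH g (T v) |v. v \<in> V \<and> nrmH g v \<le> 1}" by simp
  then show "{nrmH g (T v) |v. v \<in> V \<and> nrmH g v \<le> 1} \<noteq> {}" by blast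
  fix x assume "x \<in> {nrmH g (T v) |v. v \<in> V \<and> nrmH g v \<le> 1}"
  then obtain v where "x = nrmH g (T v)" "v \<in> V" "nrmH g v \<le> 1" by blast
  moreover have "c * nrmH g v \<le> c" using \<open>nrmH g v \<le> 1\<close> c(1) by (rule mult_left_le)
  ultimately show "x \<le> c" using c(2) by fastforce
qed

lemma opn_nonneg:
  assumes k: "is_kernel g" and V: "subsp g V" and K: "K \<ge> 0" "\<forall>v. nrmH g (T v) \<le> K * nrmH g v"
  shows "opnorm g V T \<ge> 0"
proof -
  have bdd: "bdd_above {nrmH g (T v) | v. v \<in> V \<and> nrmH g v \<le> 1}"
  proof (rule bdd_aboveI)
    fix x assume "x \<in> {nrmH g (T v) | v. v \<in> V \<and> nrmH g v \<le> 1}"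
    then obtain w where w: "x = nrmH g (T w)" "nrmH g w \<le> 1" by blast
    have "K * nrmH g w \<le> K" using w(2) K(1) by (rule mult_left_le)
    then show "x \<le> K" using K(2) w(1) by (metis order_trans)
  qed
  have "(\<lambda>i. 0) \<in> V" using V unfolding subsp_def by blast
  then have "nrmH g (T (\<lambda>i. 0)) \<le> opnorm g V T" unfolding opnorm_def
    by (intro cSup_upper[OF _ bdd]) (auto simp: nrmH_zero)
  then show ?thesis using nrmH_nonneg[OF k] order_trans by blast
qed

lemma SP_Hsub: "is_kernel g \<Longrightarrow> subsp g (Hsub g J) \<and> hasproj g (Hsub g J)"
  using subsp_Hsub hasproj_Hsub by blast
lemma SP_Hcomp: "is_kernel g \<Longrightarrow> subsp g (Hcomp g I0 I1) \<and> hasproj g (Hcomp g I0 I1)"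
  using subsp_Hcomp hasproj_Hcomp by blast

lemma Tcomp_vsc: "is_kernel g \<Longrightarrow> Tcomp g z I0 I1 (vsc c v) = vsc c (Tcomp g z I0 I1 v)"
  unfolding Tcomp_def Tmap_vsc using proj_sc SP_Hcomp by blast

lemma Tcomp_bound:
  fixes g :: "'n::finite \<Rightarrow> 'n \<Rightarrow> complex" and z :: "'n \<Rightarrow> complex^'m::finite^'m"
  assumes k: "is_kernel g"
  shows "\<exists>K\<ge>0. \<forall>v. nrmH g (Tcomp g z I0 I1 v) \<le> K * nrmH g v"
proof -
  obtain K where K: "K \<ge> 0" "\<forall>v. nrmH g (Tmap z v) \<le> K * nrmH g v" using Tmap_bound[OF k] by blast
  have "nrmH g (Tcomp g z I0 I1 v) \<le> K * nrmH g v" for v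
    unfolding Tcomp_def using proj_norm_le[OF k] SP_Hcomp[OF k] K(2) order_trans by blast
  then show ?thesis using K(1) by blast
qed

lemma Tmap_opn_le:
  assumes k: "is_kernel g" and v: "v \<in> Hsub g J"
  shows "nrmH g (Tmap z v) \<le> opnorm g (Hsub g J) (Tmap z) * nrmH g v"
proof -
  obtain K where K: "K \<ge> 0" "\<forall>v. nrmH g (Tmap z v) \<le> K * nrmH g v" using Tmap_bound[OF k] by blast
  show ?thesis by (rule opn_le[OF k subsp_Hsub K]) (auto simp: Tmap_vsc v)
qed

lemma Tmap_opn_nonneg:
  assumes k: "is_kernel g"
  shows "opnorm g (Hsub g J) (Tmap z) \<ge> 0"
proof -
  obtain K where K: "K \<ge> 0" "\<forall>v. nrmH g (Tmap z v) \<le> K * nrmH g v" using Tmap_bound[OF k] by blast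
  show ?thesis by (rule opn_nonneg[OF k subsp_Hsub K])
qed

lemma Tcomp_opn_le:
  assumes k: "is_kernel g" and v: "v \<in> Hcomp g I0 I1"
  shows "nrmH g (Tcomp g z I0 I1 v) \<le> opnorm g (Hcomp g I0 I1) (Tcomp g z I0 I1) * nrmH g v"
proof -
  obtain K where K: "K \<ge> 0" "\<forall>v. nrmH g (Tcomp g z I0 I1 v) \<le> K * nrmH g v" using Tcomp_bound[OF k] by blast
  show ?thesis by (rule opn_le[OF k subsp_Hcomp[OF k] K]) (auto simp: Tcomp_vsc[OF k] v)
qed

lemma Tcomp_indep:
  fixes g :: "'n::finite \<Rightarrow> 'n \<Rightarrow> complex" and v :: "'n \<Rightarrow> complex^'m::finite"
  assumes k: "is_kernel g" and zw: "\<forall>i\<in>I0. w i = z i" and v: "v \<in> Hsub g I1"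
  shows "Tcomp g z I0 I1 v = Tcomp g w I0 I1 v"
proof -
  let ?d = "vsub (Tmap z v) (Tmap w v)"
  have dH: "?d \<in> Hsub g (I1 - I0)" using v zw unfolding Hsub_def vsub_def Tmap_def by auto
  have "\<forall>u\<in>Hcomp g I0 I1. ipH g ?d u = 0"
  proof
    fix u :: "'n \<Rightarrow> complex^'m" assume "u \<in> Hcomp g I0 I1"
    then have "ipH g u ?d = 0" using dH unfolding Hcomp_def by blast
    then show "ipH g ?d u = 0" using ipH_sym[OF k, of ?d u] by simp
  qed
  then have p0: "projH g (Hcomp g I0 I1) ?d = (\<lambda>i. 0)" using proj_zero[OF k] SP_Hcomp[OF k] by blast
  have "Tmap z v = vadd (Tmap w v) ?d" by (simp add: vadd_def vsub_def fun_eq_iff)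
  then have "projH g (Hcomp g I0 I1) (Tmap z v) = vadd (projH g (Hcomp g I0 I1) (Tmap w v)) (\<lambda>i. 0)"
    using proj_add[OF k] SP_Hcomp[OF k] p0 by metis
  then show ?thesis unfolding Tcomp_def by (simp add: vadd_def)
qed

lemma i_ii:
  fixes g :: "'n::finite \<Rightarrow> 'n \<Rightarrow> complex" and z :: "'n \<Rightarrow> complex^'m::finite^'m"
  assumes k: "is_kernel g" and di: "discrete_interp_kernel g TYPE('m)"
  shows "opnorm g (Hcomp g I0 I1) (Tcomp g z I0 I1) \<le> opnorm g (Hsub g I0) (Tmap z)"
proof -
  have eq: "opnorm g (Hsub g I0) (Tmap z) = Inf {opnorm g (Hsub g UNIV) (Tmap w) | w. \<forall>i\<in>I0. w i = z i}"
    using di unfolding discrete_interp_kernel_def by blast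
  show ?thesis unfolding eq
  proof (rule cInf_greatest)
    show "{opnorm g (Hsub g UNIV) (Tmap w) | w. \<forall>i\<in>I0. w i = z i} \<noteq> {}" by blast
    fix s assume "s \<in> {opnorm g (Hsub g UNIV) (Tmap w) | w. \<forall>i\<in>I0. w i = z i}"
    then obtain w where w: "s = opnorm g (Hsub g UNIV) (Tmap w)" "\<forall>i\<in>I0. w i = z i" by blast
    show "opnorm g (Hcomp g I0 I1) (Tcomp g z I0 I1) \<le> s"
    proof (rule opn_least[OF k subsp_Hcomp[OF k]])
      show "s \<ge> 0" unfolding w(1) by (rule Tmap_opn_nonneg[OF k])
      show "\<forall>v\<in>Hcomp g I0 I1. nrmH g (Tcomp g z I0 I1 v) \<le> s * nrmH g v"
      proof
        fix v :: "'n \<Rightarrow> complex^'m" assume v: "v \<in> Hcomp g I0 I1"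
        then have vI1: "v \<in> Hsub g I1" unfolding Hcomp_def by blast
        have vU: "v \<in> Hsub g UNIV" using vI1 Hsub_mono[of I1 UNIV g] by blast
        have "nrmH g (Tcomp g z I0 I1 v) = nrmH g (Tcomp g w I0 I1 v)" using Tcomp_indep[OF k w(2) vI1] by simp
        also have "\<dots> \<le> nrmH g (Tmap w v)" unfolding Tcomp_def using proj_norm_le[OF k] SP_Hcomp[OF k] by blast
        also have "\<dots> \<le> s * nrmH g v" unfolding w(1) by (rule Tmap_opn_le[OF k vU])
        finally show "nrmH g (Tcomp g z I0 I1 v) \<le> s * nrmH g v" .
      qed
    qed
  qed
qed

lemma nrm_expand:
  assumes k: "is_kernel g"
  shows "(nrmH g (vadd a b))^2 = (nrmH g a)^2 + 2 * Re (ipH g a b) + (nrmH g b)^2"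
  unfolding nrmH_sq[OF k] by (rule Re_ipH_expand[OF k])

lemma adjm_adjm: "adjm (adjm A) = A"
  by (simp add: adjm_def vec_eq_iff)

lemma Hsub_single: "v \<in> Hsub g {p} \<Longrightarrow> v = (\<lambda>i. if i = p then v p else 0)"
  unfolding Hsub_def by (auto simp: fun_eq_iff)

lemma one_step:
  fixes g :: "'n::finite \<Rightarrow> 'n \<Rightarrow> complex" and z :: "'n \<Rightarrow> complex^'m::finite^'m"
  assumes k: "is_kernel g" and pI: "p \<notin> I0" and c0: "c \<ge> 0" and cc: "c < c'"
    and A: "\<forall>h\<in>Hsub g I0. nrmH g (Tmap z h) \<le> c * nrmH g h"
    and B: "\<forall>x\<in>Hcomp g I0 (insert p I0). nrmH g (Tcomp g z I0 (insert p I0) x) \<le> c * nrmH g x"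
  shows "\<exists>Z. \<forall>x\<in>Hsub g (insert p I0). nrmH g (Tmap (z(p:=Z)) x) \<le> c' * nrmH g x"
proof (cases "p \<in> spt g")
  case False
  have "Hsub g (insert p I0) = Hsub g I0" using False unfolding Hsub_def by auto
  moreover have "c * nrmH g x \<le> c' * nrmH g x" for x
    using cc nrmH_nonneg[OF k, of x] by (simp add: mult_right_mono)
  ultimately show ?thesis using A by (intro exI[of _ "z p"]) (auto intro: order_trans)
next
  case pspt: True
  define I1 where "I1 = insert p I0"
  have I10: "I1 - I0 = {p}" unfolding I1_def using pI by auto
  define PI where "PI = projH g (Hsub g I0 :: ('n \<Rightarrow> complex^'m) set)"
  define Pp where "Pp = projH g (Hsub g {p} :: ('n \<Rightarrow> complex^'m) set)"
  define PK where "PK = projH g (Hcomp g I0 I1 :: ('n \<Rightarrow> complex^'m) set)"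
  define Q where "Q v = PK (Tmap z v)" for v
  have SI: "subsp g (Hsub g I0 :: ('n \<Rightarrow> complex^'m) set)" "hasproj g (Hsub g I0 :: ('n \<Rightarrow> complex^'m) set)"
    using SP_Hsub[OF k] by auto
  have Sp: "subsp g (Hsub g {p} :: ('n \<Rightarrow> complex^'m) set)" "hasproj g (Hsub g {p} :: ('n \<Rightarrow> complex^'m) set)"
    using SP_Hsub[OF k] by auto
  have SK: "subsp g (Hcomp g I0 I1 :: ('n \<Rightarrow> complex^'m) set)" "hasproj g (Hcomp g I0 I1 :: ('n \<Rightarrow> complex^'m) set)"
    using SP_Hcomp[OF k] by auto
  have HK: "Hcomp g I0 I1 = {v \<in> Hsub g I1. \<forall>u\<in>Hsub g {p}. ipH g v u = 0}"
    unfolding Hcomp_def I10 ..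
  have I0I1: "Hsub g I0 \<subseteq> Hsub g I1" "Hsub g {p} \<subseteq> Hsub g I1" "Hsub g I1 \<subseteq> Hsub g UNIV"
    unfolding I1_def by (auto intro!: Hsub_mono)

  have F1: "PK v = vsub v (Pp v)" if v: "v \<in> Hsub g I1" for v :: "'n \<Rightarrow> complex^'m"
    unfolding PK_def
  proof (rule proj_eq[OF k SK])
    have "Pp v \<in> Hsub g I1" using proj_in[OF k Sp] I0I1 unfolding Pp_def by blast
    then have "vsub v (Pp v) \<in> Hsub g I1" using subsp_vsub[OF subsp_Hsub v] by blast
    then show "vsub v (Pp v) \<in> Hcomp g I0 I1" unfolding HK using proj_perp[OF k Sp] unfolding Pp_def by blast
    have e: "vsub v (vsub v (Pp v)) = Pp v" by (simp add: vsub_def)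
    show "\<forall>u\<in>Hcomp g I0 I1. ipH g (vsub v (vsub v (Pp v))) u = 0"
    proof
      fix u :: "'n \<Rightarrow> complex^'m" assume "u \<in> Hcomp g I0 I1"
      then have "ipH g u (Pp v) = 0" unfolding HK Pp_def using proj_in[OF k Sp] by blast
      then show "ipH g (vsub v (vsub v (Pp v))) u = 0" unfolding e using ipH_sym[OF k, of "Pp v" u] by simp
    qed
  qed
  have F2: "PK u = (\<lambda>i. 0)" if u: "u \<in> Hsub g {p}" for u :: "'n \<Rightarrow> complex^'m"
    unfolding PK_def
  proof (rule proj_zero[OF k SK], rule ballI)
    fix v :: "'n \<Rightarrow> complex^'m" assume "v \<in> Hcomp g I0 I1"
    then have "ipH g v u = 0" unfolding HK using u by blast
    then show "ipH g u v = 0" using ipH_sym[OF k, of u v] by simp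
  qed
  have Pyth: "(nrmH g v)^2 = (nrmH g (Pp v))^2 + (nrmH g (PK v))^2" if v: "v \<in> Hsub g I1" for v :: "'n \<Rightarrow> complex^'m"
  proof -
    have e: "v = vadd (Pp v) (vsub v (Pp v))" by (simp add: vadd_def vsub_def)
    have "ipH g (vsub v (Pp v)) (Pp v) = 0" unfolding Pp_def using proj_perp[OF k Sp] proj_in[OF k Sp] by blast
    then have o: "ipH g (Pp v) (vsub v (Pp v)) = 0" using ipH_sym[OF k, of "Pp v" "vsub v (Pp v)"] by simp
    have "(nrmH g v)^2 = (nrmH g (Pp v))^2 + (nrmH g (vsub v (Pp v)))^2"
      using nrm_expand[OF k, of "Pp v" "vsub v (Pp v)"] o e by simp
    then show ?thesis using F1[OF v] by simp
  qed
  have PKadd: "PK (vadd a b) = vadd (PK a) (PK b)" for a b :: "'n \<Rightarrow> complex^'m" unfolding PK_def using proj_add[OF k SK] .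
  have PKsc: "PK (vsc x a) = vsc x (PK a)" for x and a :: "'n \<Rightarrow> complex^'m" unfolding PK_def using proj_sc[OF k SK] .
  have PKsub: "PK (vsub a b) = vsub (PK a) (PK b)" for a b :: "'n \<Rightarrow> complex^'m" unfolding PK_def using proj_sub[OF k SK] .
  have Ppadd: "Pp (vadd a b) = vadd (Pp a) (Pp b)" for a b :: "'n \<Rightarrow> complex^'m" unfolding Pp_def using proj_add[OF k Sp] .
  have Ppsc: "Pp (vsc x a) = vsc x (Pp a)" for x and a :: "'n \<Rightarrow> complex^'m" unfolding Pp_def using proj_sc[OF k Sp] .
  have PIadd: "PI (vadd a b) = vadd (PI a) (PI b)" for a b :: "'n \<Rightarrow> complex^'m" unfolding PI_def using proj_add[OF k SI] .
  have PIsc: "PI (vsc x a) = vsc x (PI a)" for x and a :: "'n \<Rightarrow> complex^'m" unfolding PI_def using proj_sc[OF k SI] .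
  have Qadd: "Q (vadd a b) = vadd (Q a) (Q b)" for a b :: "'n \<Rightarrow> complex^'m" unfolding Q_def Tmap_vadd PKadd ..
  have Qsc: "Q (vsc x a) = vsc x (Q a)" for x and a :: "'n \<Rightarrow> complex^'m" unfolding Q_def Tmap_vsc PKsc ..
  have Qsub: "Q (vsub a b) = vsub (Q a) (Q b)" for a b :: "'n \<Rightarrow> complex^'m" unfolding Q_def Tmap_vsub PKsub ..
  have B': "nrmH g (Q x) \<le> c * nrmH g x" if x: "x \<in> Hsub g I1" for x :: "'n \<Rightarrow> complex^'m"
  proof -
    have ex: "x = vadd (PK x) (Pp x)" using F1[OF x] by (simp add: vadd_def vsub_def)
    have PpH: "Pp x \<in> Hsub g {p}" unfolding Pp_def using proj_in[OF k Sp] .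
    have "Q (Pp x) = (\<lambda>i. 0)" unfolding Q_def using F2 Tmap_Hsub[OF PpH] by blast
    then have "Q x = vadd (Q (PK x)) (\<lambda>i. 0)" using Qadd[of "PK x" "Pp x"] ex by simp
    then have "Q x = Tcomp g z I0 I1 (PK x)" unfolding Q_def Tcomp_def PK_def by (simp add: vadd_def)
    moreover have "PK x \<in> Hcomp g I0 I1" unfolding PK_def using proj_in[OF k SK] .
    ultimately have "nrmH g (Q x) \<le> c * nrmH g (PK x)" using B unfolding I1_def by simp
    also have "\<dots> \<le> c * nrmH g x" using proj_norm_le[OF k SK] c0 unfolding PK_def by (simp add: mult_left_mono)
    finally show ?thesis .
  qed

  define dl where "dl a = (\<lambda>i. if i = p then a else (0::complex^'m))" for a
  define la where "la a = vsub (dl a) (PI (dl a))" for a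
  have dladd: "dl (a + b) = vadd (dl a) (dl b)" for a b by (simp add: dl_def vadd_def fun_eq_iff)
  have dlsc: "dl (x *s a) = vsc x (dl a)" for x a by (simp add: dl_def vsc_def fun_eq_iff)
  have laadd: "la (a + b) = vadd (la a) (la b)" for a b
    unfolding la_def dladd PIadd by (simp add: vadd_def vsub_def fun_eq_iff)
  have lasc: "la (x *s a) = vsc x (la a)" for x a
    unfolding la_def dlsc PIsc by (simp add: vsc_def vsub_def fun_eq_iff vector_ssub_ldistrib)
  have PIH: "PI v \<in> Hsub g I0" for v unfolding PI_def using proj_in[OF k SI] .
  have dlH: "dl a \<in> Hsub g I1" for a using pspt unfolding dl_def Hsub_def I1_def by auto
  have laH: "la a \<in> Hsub g I1" for a unfolding la_def using subsp_vsub[OF subsp_Hsub dlH] PIH I0I1 by blast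
  have laperp: "\<forall>h\<in>Hsub g I0. ipH g (la a) h = 0" for a unfolding la_def PI_def using proj_perp[OF k SI] by blast
  have lap: "la a p = a" for a
  proof -
    have "PI (dl a) p = 0" using PIH[of "dl a"] pI unfolding Hsub_def by blast
    then show ?thesis unfolding la_def vsub_def dl_def by simp
  qed
  define Bf where "Bf y h = complex_of_real (c'^2) * ipH g y h - ipH g (Q y) (Q h)" for y h
  have coer: "y = (\<lambda>i. 0)" if y: "y \<in> Hsub g I0" "Bf y y = 0" for y :: "'n \<Rightarrow> complex^'m"
  proof -
    have yI1: "y \<in> Hsub g I1" using y(1) I0I1 by blast
    have "Re (Bf y y) = c'^2 * (nrmH g y)^2 - (nrmH g (Q y))^2"
      unfolding Bf_def nrmH_sq[OF k] by simp
    then have e: "(nrmH g (Q y))^2 = c'^2 * (nrmH g y)^2" using y(2) by simp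
    have "nrmH g (Q y) \<le> c * nrmH g y" by (rule B'[OF yI1])
    then have "(nrmH g (Q y))^2 \<le> (c * nrmH g y)^2" using nrmH_nonneg[OF k] by (intro power_mono) auto
    then have "c'^2 * (nrmH g y)^2 \<le> c^2 * (nrmH g y)^2" using e by (simp add: power_mult_distrib)
    moreover have "c^2 < c'^2" using c0 cc by (intro power_strict_mono) auto
    ultimately have "(nrmH g y)^2 \<le> 0"
      by (metis mult_le_cancel_right not_le order.strict_trans2 zero_le_power2 less_eq_real_def)
    then have "Re (ipH g y y) = 0" using nrmH_sq[OF k, of y] ipH_self_real(2)[OF k, of y] by simp
    then show ?thesis using ipH_self_zero[OF k, of y] y(1) I0I1 by blast
  qed
  have Badd: "Bf (vadd y1 y2) h = Bf y1 h + Bf y2 h" for y1 y2 h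
    unfolding Bf_def Qadd ipH_vadd_left by (simp add: algebra_simps)
  have Bsc: "Bf (vsc x y) h = x * Bf y h" for x y h
    unfolding Bf_def Qsc ipH_vsc_left by (simp add: algebra_simps)
  have Bsub: "Bf (vsub y1 y2) h = Bf y1 h - Bf y2 h" for y1 y2 h
    unfolding Bf_def Qsub ipH_vsub_left by (simp add: algebra_simps)
  have exy: "\<exists>y\<in>Hsub g I0. \<forall>h\<in>Hsub g I0. Bf y h = ipH g (Q (la a)) (Q h)" for a
  proof (rule LM)
    show "y = (\<lambda>i. 0)" if "y \<in> Hsub g I0" "Bf y y = 0" for y using coer that by blast
  qed (auto simp: Bf_def Qadd Qsc ipH_vadd_left ipH_vadd_right ipH_vsc_left ipH_vsc_right algebra_simps)
  define ya where "ya a = (SOME y. y \<in> Hsub g I0 \<and> (\<forall>h\<in>Hsub g I0. Bf y h = ipH g (Q (la a)) (Q h)))" for a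
  have ya: "ya a \<in> Hsub g I0 \<and> (\<forall>h\<in>Hsub g I0. Bf (ya a) h = ipH g (Q (la a)) (Q h))" for a
    unfolding ya_def using someI_ex[OF exy[of a, unfolded Bex_def]] by blast
  have yuniq: "y1 = y2" if "y1 \<in> Hsub g I0" "y2 \<in> Hsub g I0" "\<forall>h\<in>Hsub g I0. Bf y1 h = Bf y2 h" for y1 y2 :: "'n \<Rightarrow> complex^'m"
  proof -
    have d: "vsub y1 y2 \<in> Hsub g I0" using subsp_vsub[OF subsp_Hsub that(1,2)] .
    then have "Bf (vsub y1 y2) (vsub y1 y2) = 0" unfolding Bsub using that(3) by simp
    then have "vsub y1 y2 = (\<lambda>i. 0)" using coer d by blast
    then show ?thesis by (simp add: vsub_def fun_eq_iff)
  qed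
  have yaadd: "ya (a + b) = vadd (ya a) (ya b)" for a b
  proof (rule yuniq)
    show "ya (a + b) \<in> Hsub g I0" using ya by blast
    show "vadd (ya a) (ya b) \<in> Hsub g I0" using ya subsp_Hsub unfolding subsp_def by blast
    show "\<forall>h\<in>Hsub g I0. Bf (ya (a + b)) h = Bf (vadd (ya a) (ya b)) h"
    proof
      fix h :: "'n \<Rightarrow> complex^'m" assume h: "h \<in> Hsub g I0"
      have "Bf (ya (a + b)) h = ipH g (Q (la (a + b))) (Q h)" using ya h by blast
      also have "\<dots> = ipH g (Q (la a)) (Q h) + ipH g (Q (la b)) (Q h)" unfolding laadd Qadd ipH_vadd_left ..
      also have "\<dots> = Bf (ya a) h + Bf (ya b) h" using ya h by simp
      also have "\<dots> = Bf (vadd (ya a) (ya b)) h" by (simp add: Badd)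
      finally show "Bf (ya (a + b)) h = Bf (vadd (ya a) (ya b)) h" .
    qed
  qed
  have yasc: "ya (x *s a) = vsc x (ya a)" for x a
  proof (rule yuniq)
    show "ya (x *s a) \<in> Hsub g I0" using ya by blast
    show "vsc x (ya a) \<in> Hsub g I0" using ya subsp_Hsub unfolding subsp_def by blast
    show "\<forall>h\<in>Hsub g I0. Bf (ya (x *s a)) h = Bf (vsc x (ya a)) h"
    proof
      fix h :: "'n \<Rightarrow> complex^'m" assume h: "h \<in> Hsub g I0"
      have "Bf (ya (x *s a)) h = ipH g (Q (la (x *s a))) (Q h)" using ya h by blast
      also have "\<dots> = x * ipH g (Q (la a)) (Q h)" unfolding lasc Qsc ipH_vsc_left ..
      also have "\<dots> = x * Bf (ya a) h" using ya h by simp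
      also have "\<dots> = Bf (vsc x (ya a)) h" by (simp add: Bsc)
      finally show "Bf (ya (x *s a)) h = Bf (vsc x (ya a)) h" .
    qed
  qed

  define r where "r a = (\<lambda>i. if i = p then 0 else la a i + ya a i)" for a
  have radd: "r (a + b) = vadd (r a) (r b)" for a b
    unfolding r_def laadd yaadd by (simp add: vadd_def fun_eq_iff)
  have rsc: "r (x *s a) = vsc x (r a)" for x a
    unfolding r_def lasc yasc by (simp add: vsc_def fun_eq_iff vector_add_ldistrib)
  define \<beta> where "\<beta> a = - (Pp (Tmap z (r a)) p)" for a
  have \<beta>add: "\<beta> (a + b) = \<beta> a + \<beta> b" for a b
    unfolding \<beta>_def radd Tmap_vadd Ppadd by (simp add: vadd_def)
  have \<beta>sc: "\<beta> (x *s a) = x *s \<beta> a" for x a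
    unfolding \<beta>_def rsc Tmap_vsc Ppsc by (simp add: vsc_def)
  have lin: "Vector_Spaces.linear (*s) (*s) \<beta>"
    by (simp add: Vector_Spaces.linear_iff vec.vector_space_axioms \<beta>add \<beta>sc)
  define M where "M = matrix \<beta>"
  have M: "M *v a = \<beta> a" for a unfolding M_def by (rule matrix_works[OF lin])
  define w where "w = z(p := adjm M)"
  have wp: "adjm (w p) = M" unfolding w_def by (simp add: adjm_adjm)
  have wi: "i \<noteq> p \<Longrightarrow> w i = z i" for i unfolding w_def by simp
  show ?thesis
  proof (intro exI[of _ "adjm M"] ballI)
    fix x :: "'n \<Rightarrow> complex^'m" assume xH0: "x \<in> Hsub g (insert p I0)"
    have xH: "x \<in> Hsub g I1" using xH0 unfolding I1_def .
    define x1 where "x1 = PI x"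
    define x2 where "x2 = vsub x x1"
    define a where "a = x p"
    define y where "y = ya a"
    define u where "u = vsub x1 y"
    have x1H: "x1 \<in> Hsub g I0" unfolding x1_def by (rule PIH)
    have yH: "y \<in> Hsub g I0" unfolding y_def using ya by blast
    have uH: "u \<in> Hsub g I0" unfolding u_def using subsp_vsub[OF subsp_Hsub x1H yH] .
    have x1p: "x1 p = 0" using x1H pI unfolding Hsub_def by blast
    have yp: "y p = 0" using yH pI unfolding Hsub_def by blast
    have x2perp: "\<forall>h\<in>Hsub g I0. ipH g x2 h = 0" unfolding x2_def x1_def PI_def using proj_perp[OF k SI] by blast
    have x2eq: "x2 = la a"
    proof -
      define d where "d = vsub x2 (la a)"
      have dH: "d \<in> Hsub g I0" unfolding Hsub_def
      proof (intro CollectI allI impI)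
        fix i assume i: "i \<notin> I0 \<inter> spt g"
        show "d i = 0"
        proof (cases "i = p")
          case True then show ?thesis unfolding d_def x2_def vsub_def using x1p lap[of a] a_def by simp
        next
          case False
          then have "i \<notin> I1 \<inter> spt g" using i unfolding I1_def by auto
          then have "x i = 0" "la a i = 0" using xH laH[of a] unfolding Hsub_def by auto
          moreover have "x1 i = 0" using x1H i unfolding Hsub_def by blast
          ultimately show ?thesis unfolding d_def x2_def vsub_def by simp
        qed
      qed
      have "ipH g d d = ipH g x2 d - ipH g (la a) d" unfolding d_def ipH_vsub_left ..
      also have "\<dots> = 0" using x2perp laperp dH by simp
      finally have "Re (ipH g d d) = 0" by simp
      then have "d = (\<lambda>i. 0)" using ipH_self_zero[OF k] dH I0I1 by blast
      then show ?thesis unfolding d_def by (simp add: vsub_def fun_eq_iff)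
    qed
    let ?Tw = "Tmap w x"
    have TwH: "?Tw \<in> Hsub g I1" using Tmap_Hsub[OF xH] .
    have C1: "(nrmH g ?Tw)^2 = (nrmH g (Pp ?Tw))^2 + (nrmH g (PK ?Tw))^2" by (rule Pyth[OF TwH])
    have C2: "PK ?Tw = Q x"
    proof -
      define e where "e = vsub ?Tw (Tmap z x)"
      have eH: "e \<in> Hsub g {p}" unfolding e_def Hsub_def vsub_def Tmap_def using wi pspt by auto
      have "?Tw = vadd (Tmap z x) e" unfolding e_def by (simp add: vadd_def vsub_def)
      then have "PK ?Tw = vadd (Q x) (\<lambda>i. 0)" using PKadd F2[OF eH] unfolding Q_def by metis
      then show ?thesis by (simp add: vadd_def)
    qed
    have C3: "Pp ?Tw = Pp (Tmap z u)"
    proof -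
      have key: "?Tw = vadd (Tmap z u) (vadd (Tmap z (r a)) (dl (\<beta> a)))"
      proof
        fix i show "?Tw i = vadd (Tmap z u) (vadd (Tmap z (r a)) (dl (\<beta> a))) i"
        proof (cases "i = p")
          case True
          then show ?thesis unfolding Tmap_def vadd_def dl_def r_def u_def vsub_def
            using wp M[of a] x1p yp a_def by simp
        next
          case False
          have "x i = x1 i + la a i" using x2eq unfolding x2_def vsub_def by (metis add_diff_cancel_left' diff_add_cancel)
          then show ?thesis unfolding Tmap_def vadd_def dl_def r_def u_def vsub_def
            using False wi[OF False] by (simp add: y_def matrix_vector_right_distrib matrix_vector_mult_diff_distrib algebra_simps)
        qed
      qed
      have PpH: "Pp v \<in> Hsub g {p}" for v unfolding Pp_def using proj_in[OF k Sp] .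
      have dlp: "dl v \<in> Hsub g {p}" for v using pspt unfolding dl_def Hsub_def by auto
      have "Pp (dl (\<beta> a)) = dl (\<beta> a)" unfolding Pp_def using proj_id[OF k Sp dlp] .
      moreover have "vadd (Pp (Tmap z (r a))) (dl (\<beta> a)) = (\<lambda>i. 0)"
      proof
        fix i show "vadd (Pp (Tmap z (r a))) (dl (\<beta> a)) i = 0"
        proof (cases "i = p")
          case True then show ?thesis unfolding vadd_def dl_def \<beta>_def by simp
        next
          case False
          then have "Pp (Tmap z (r a)) i = 0" using PpH[of "Tmap z (r a)"] unfolding Hsub_def by auto
          then show ?thesis unfolding vadd_def dl_def using False by simp
        qed
      qed
      ultimately have "Pp ?Tw = vadd (Pp (Tmap z u)) (\<lambda>i. 0)" using key Ppadd by metis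
      then show ?thesis by (simp add: vadd_def)
    qed
    have TuH: "Tmap z u \<in> Hsub g I1" using Tmap_Hsub[OF uH] I0I1 by blast
    have C4: "(nrmH g (Pp (Tmap z u)))^2 + (nrmH g (Q u))^2 \<le> c^2 * (nrmH g u)^2"
    proof -
      have "nrmH g (Tmap z u) \<le> c * nrmH g u" using A uH by blast
      then have "(nrmH g (Tmap z u))^2 \<le> (c * nrmH g u)^2" using nrmH_nonneg[OF k] by (intro power_mono) auto
      then show ?thesis using Pyth[OF TuH] unfolding Q_def by (simp add: power_mult_distrib)
    qed
    let ?v = "vadd y x2"
    have xe: "x = vadd u ?v" unfolding u_def x2_def by (simp add: vadd_def vsub_def fun_eq_iff)
    have C5: "Q x = vadd (Q u) (Q ?v)" using xe Qadd by metis
    have C6: "Re (ipH g (Q u) (Q ?v)) = c'^2 * Re (ipH g u y)"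
    proof -
      have "Bf y u = ipH g (Q (la a)) (Q u)" using ya uH unfolding y_def by blast
      then have "ipH g (Q ?v) (Q u) = complex_of_real (c'^2) * ipH g y u"
        unfolding Bf_def Qadd ipH_vadd_left x2eq by (simp add: algebra_simps)
      then have "Re (ipH g (Q u) (Q ?v)) = Re (complex_of_real (c'^2) * ipH g y u)"
        using ipH_sym[OF k, of "Q u" "Q ?v"] by simp
      also have "\<dots> = c'^2 * Re (ipH g y u)" by simp
      also have "Re (ipH g y u) = Re (ipH g u y)" using ipH_sym[OF k, of y u] by simp
      finally show ?thesis .
    qed
    have vH: "?v \<in> Hsub g I1"
    proof -
      have "x2 \<in> Hsub g I1" unfolding x2_def using subsp_vsub[OF subsp_Hsub xH] x1H I0I1 by blast
      then show ?thesis using yH I0I1 subsp_Hsub unfolding subsp_def by blast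
    qed
    have C7: "(nrmH g (Q ?v))^2 \<le> c^2 * (nrmH g ?v)^2"
    proof -
      have "nrmH g (Q ?v) \<le> c * nrmH g ?v" by (rule B'[OF vH])
      then have "(nrmH g (Q ?v))^2 \<le> (c * nrmH g ?v)^2" using nrmH_nonneg[OF k] by (intro power_mono) auto
      then show ?thesis by (simp add: power_mult_distrib)
    qed
    have C8: "(nrmH g x)^2 = (nrmH g u)^2 + 2 * Re (ipH g u y) + (nrmH g ?v)^2"
    proof -
      have "ipH g x2 u = 0" using x2perp uH by blast
      then have "ipH g u x2 = 0" using ipH_sym[OF k, of u x2] by simp
      then have "Re (ipH g u ?v) = Re (ipH g u y)" by (simp add: ipH_vadd_right)
      then show ?thesis using nrm_expand[OF k, of u ?v] xe by simp
    qed
    have Qx: "(nrmH g (Q x))^2 = (nrmH g (Q u))^2 + 2 * (c'^2 * Re (ipH g u y)) + (nrmH g (Q ?v))^2"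
      using nrm_expand[OF k, of "Q u" "Q ?v"] C5 C6 by simp
    have cc2: "c^2 \<le> c'^2" using c0 cc by (intro power_mono) auto
    have m1: "c^2 * (nrmH g u)^2 \<le> c'^2 * (nrmH g u)^2" using cc2 by (intro mult_right_mono) auto
    have m2: "c^2 * (nrmH g ?v)^2 \<le> c'^2 * (nrmH g ?v)^2" using cc2 by (intro mult_right_mono) auto
    have "(nrmH g ?Tw)^2 \<le> c'^2 * (nrmH g x)^2"
      unfolding C1 C2 C3 C8 using Qx C4 C7 m1 m2 by (simp add: algebra_simps)
    then have "(nrmH g ?Tw)^2 \<le> (c' * nrmH g x)^2" by (simp add: power_mult_distrib)
    then show "nrmH g (Tmap (z(p := adjm M)) x) \<le> c' * nrmH g x"
      unfolding w_def[symmetric] using c0 cc nrmH_nonneg[OF k, of x] power2_le_imp_le by (metis less_le_trans mult_nonneg_nonneg less_eq_real_def)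
  qed
qed

lemma extend:
  fixes g :: "'n::finite \<Rightarrow> 'n \<Rightarrow> complex"
  assumes k: "is_kernel g"
    and H3: "\<forall>I0 I1 (z :: 'n \<Rightarrow> complex^'m::finite^'m). I0 \<subseteq> I1 \<and> (\<exists>p. I1 - I0 = {p}) \<longrightarrow>
              opnorm g (Hcomp g I0 I1) (Tcomp g z I0 I1) \<le> opnorm g (Hsub g I0) (Tmap z)"
    and F: "finite F"
  shows "\<forall>(z :: 'n \<Rightarrow> complex^'m^'m) \<epsilon>. \<epsilon> > 0 \<longrightarrow> (\<exists>w. (\<forall>i\<in>I. w i = z i) \<and>
            opnorm g (Hsub g (I \<union> F)) (Tmap w) \<le> opnorm g (Hsub g I) (Tmap z) + \<epsilon>)"
  using F
proof (induction F rule: finite_induct)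
  case empty
  show ?case
  proof (intro allI impI)
    fix z :: "'n \<Rightarrow> complex^'m^'m" and \<epsilon> :: real assume "\<epsilon> > 0"
    then show "\<exists>w. (\<forall>i\<in>I. w i = z i) \<and> opnorm g (Hsub g (I \<union> {})) (Tmap w) \<le> opnorm g (Hsub g I) (Tmap z) + \<epsilon>"
      by (intro exI[of _ z]) simp
  qed
next
  case (insert q F)
  show ?case
  proof (intro allI impI)
    fix z :: "'n \<Rightarrow> complex^'m^'m" and \<epsilon> :: real assume e: "\<epsilon> > 0"
    show "\<exists>w. (\<forall>i\<in>I. w i = z i) \<and> opnorm g (Hsub g (I \<union> insert q F)) (Tmap w) \<le> opnorm g (Hsub g I) (Tmap z) + \<epsilon>"
    proof (cases "q \<in> I")
      case True
      then have eq: "I \<union> insert q F = I \<union> F" by auto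
      show ?thesis unfolding eq by (rule insert.IH[rule_format, OF e])
    next
      case False
      obtain w1 where w1: "\<forall>i\<in>I. w1 i = z i"
        "opnorm g (Hsub g (I \<union> F)) (Tmap w1) \<le> opnorm g (Hsub g I) (Tmap z) + \<epsilon>/2"
        using insert.IH[rule_format, of "\<epsilon>/2" z] e by auto
      define I0 where "I0 = I \<union> F"
      define c1 where "c1 = opnorm g (Hsub g I0) (Tmap w1)"
      have qI0: "q \<notin> I0" unfolding I0_def using False insert.hyps(2) by auto
      have c10: "c1 \<ge> 0" unfolding c1_def by (rule Tmap_opn_nonneg[OF k])
      have hc: "opnorm g (Hcomp g I0 (insert q I0)) (Tcomp g w1 I0 (insert q I0)) \<le> c1"
      proof -
        have "I0 \<subseteq> insert q I0 \<and> (\<exists>p. insert q I0 - I0 = {p})" using qI0 by auto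
        then show ?thesis unfolding c1_def by (rule H3[rule_format])
      qed
      have A: "\<forall>h\<in>Hsub g I0. nrmH g (Tmap w1 h) \<le> c1 * nrmH g h"
        unfolding c1_def using Tmap_opn_le[OF k] by blast
      have B: "\<forall>x\<in>Hcomp g I0 (insert q I0). nrmH g (Tcomp g w1 I0 (insert q I0) x) \<le> c1 * nrmH g x"
      proof
        fix x :: "'n \<Rightarrow> complex^'m" assume x: "x \<in> Hcomp g I0 (insert q I0)"
        have "nrmH g (Tcomp g w1 I0 (insert q I0) x) \<le> opnorm g (Hcomp g I0 (insert q I0)) (Tcomp g w1 I0 (insert q I0)) * nrmH g x"
          by (rule Tcomp_opn_le[OF k x])
        also have "\<dots> \<le> c1 * nrmH g x" using hc nrmH_nonneg[OF k, of x] by (rule mult_right_mono)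
        finally show "nrmH g (Tcomp g w1 I0 (insert q I0) x) \<le> c1 * nrmH g x" .
      qed
      have cc: "c1 < c1 + \<epsilon>/2" using e by simp
      obtain Z where Z: "\<forall>x\<in>Hsub g (insert q I0). nrmH g (Tmap (w1(q:=Z)) x) \<le> (c1 + \<epsilon>/2) * nrmH g x"
        using one_step[OF k qI0 c10 cc A B] by blast
      have o: "opnorm g (Hsub g (insert q I0)) (Tmap (w1(q:=Z))) \<le> c1 + \<epsilon>/2"
      proof (rule opn_least[OF k subsp_Hsub _ Z])
        show "0 \<le> c1 + \<epsilon> / 2" using c10 e by simp
      qed
      have eqs: "insert q I0 = I \<union> insert q F" unfolding I0_def by auto
      have ag: "\<forall>i\<in>I. (w1(q:=Z)) i = z i"
      proof
        fix i assume "i \<in> I" then have "i \<noteq> q" "w1 i = z i" using False w1(1) by auto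
        then show "(w1(q:=Z)) i = z i" by simp
      qed
      have c1le: "c1 \<le> opnorm g (Hsub g I) (Tmap z) + \<epsilon>/2" using w1(2) unfolding c1_def I0_def .
      have "opnorm g (Hsub g (I \<union> insert q F)) (Tmap (w1(q:=Z))) \<le> c1 + \<epsilon>/2" using o unfolding eqs .
      then have "opnorm g (Hsub g (I \<union> insert q F)) (Tmap (w1(q:=Z))) \<le> opnorm g (Hsub g I) (Tmap z) + \<epsilon>"
        using c1le by linarith
      then have "(\<forall>i\<in>I. (w1(q:=Z)) i = z i) \<and> opnorm g (Hsub g (I \<union> insert q F)) (Tmap (w1(q:=Z))) \<le> opnorm g (Hsub g I) (Tmap z) + \<epsilon>"
        using ag by blast
      then show ?thesis by blast
    qed
  qed
qed

lemma iii_i: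
  fixes g :: "'n::finite \<Rightarrow> 'n \<Rightarrow> complex"
  assumes k: "is_kernel g"
    and H3: "\<forall>I0 I1 (z :: 'n \<Rightarrow> complex^'m::finite^'m). I0 \<subseteq> I1 \<and> (\<exists>p. I1 - I0 = {p}) \<longrightarrow>
              opnorm g (Hcomp g I0 I1) (Tcomp g z I0 I1) \<le> opnorm g (Hsub g I0) (Tmap z)"
  shows "discrete_interp_kernel g TYPE('m)"
  unfolding discrete_interp_kernel_def
proof (intro allI)
  fix I and z :: "'n \<Rightarrow> complex^'m^'m"
  let ?S = "{opnorm g (Hsub g UNIV) (Tmap w) | w. \<forall>i\<in>I. w i = z i}"
  let ?c = "opnorm g (Hsub g I) (Tmap z)"
  have le1: "?c \<le> Inf ?S"
  proof (rule cInf_greatest)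
    show "?S \<noteq> {}" by blast
    fix s assume "s \<in> ?S"
    then obtain w where w: "s = opnorm g (Hsub g UNIV) (Tmap w)" "\<forall>i\<in>I. w i = z i" by blast
    show "?c \<le> s"
    proof (rule opn_least[OF k subsp_Hsub])
      show "s \<ge> 0" unfolding w(1) by (rule Tmap_opn_nonneg[OF k])
      show "\<forall>v\<in>Hsub g I. nrmH g (Tmap z v) \<le> s * nrmH g v"
      proof
        fix v :: "'n \<Rightarrow> complex^'m" assume v: "v \<in> Hsub g I"
        have "Tmap z v = Tmap w v"
        proof
          fix i show "Tmap z v i = Tmap w v i"
          proof (cases "i \<in> I")
            case True then show ?thesis using w(2) unfolding Tmap_def by simp
          next
            case False then have "v i = 0" using v unfolding Hsub_def by blast
            then show ?thesis unfolding Tmap_def by simp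
          qed
        qed
        moreover have "v \<in> Hsub g UNIV" using v Hsub_mono[of I UNIV g] by blast
        ultimately show "nrmH g (Tmap z v) \<le> s * nrmH g v" unfolding w(1) using Tmap_opn_le[OF k] by simp
      qed
    qed
  qed
  have le2: "Inf ?S \<le> ?c"
  proof (rule field_le_epsilon)
    fix e :: real assume e: "e > 0"
    have fin: "finite (UNIV - I)" by simp
    have ex: "\<exists>w. (\<forall>i\<in>I. w i = z i) \<and> opnorm g (Hsub g (I \<union> (UNIV - I))) (Tmap w) \<le> ?c + e"
      using extend[OF k H3 fin] e by blast
    then obtain w where w: "\<forall>i\<in>I. w i = z i" "opnorm g (Hsub g (I \<union> (UNIV - I))) (Tmap w) \<le> ?c + e"
      by blast
    have "bdd_below ?S"
    proof (rule bdd_belowI)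
      fix s assume "s \<in> ?S"
      then obtain w' :: "'n \<Rightarrow> complex^'m^'m" where "s = opnorm g (Hsub g UNIV) (Tmap w')" by blast
      then show "0 \<le> s" using Tmap_opn_nonneg[OF k] by simp
    qed
    moreover have "opnorm g (Hsub g UNIV) (Tmap w) \<in> ?S" using w(1) by blast
    ultimately have "Inf ?S \<le> opnorm g (Hsub g UNIV) (Tmap w)" by (rule cInf_lower[rotated])
    also have "\<dots> \<le> ?c + e" using w(2) by simp
    finally show "Inf ?S \<le> ?c + e" .
  qed
  show "?c = Inf ?S" by (rule antisym[OF le1 le2])
qed

theorem proposition2p1:
  fixes g :: "'n::finite \<Rightarrow> 'n \<Rightarrow> complex"
  assumes "is_kernel g"
  shows "(discrete_interp_kernel g TYPE('m::finite) \<longleftrightarrow>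
           (\<forall>I0 I1 (z :: 'n \<Rightarrow> complex^'m^'m). I0 \<subseteq> I1 \<longrightarrow>
              opnorm g (Hcomp g I0 I1) (Tcomp g z I0 I1) \<le> opnorm g (Hsub g I0) (Tmap z)))
       \<and> ((\<forall>I0 I1 (z :: 'n \<Rightarrow> complex^'m^'m). I0 \<subseteq> I1 \<longrightarrow>
              opnorm g (Hcomp g I0 I1) (Tcomp g z I0 I1) \<le> opnorm g (Hsub g I0) (Tmap z))
          \<longleftrightarrow>
          (\<forall>I0 I1 (z :: 'n \<Rightarrow> complex^'m^'m). I0 \<subseteq> I1 \<and> (\<exists>p. I1 - I0 = {p}) \<longrightarrow>
              opnorm g (Hcomp g I0 I1) (Tcomp g z I0 I1) \<le> opnorm g (Hsub g I0) (Tmap z)))"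
proof -
  note k = assms
  have i2: "discrete_interp_kernel g TYPE('m) \<Longrightarrow> (\<forall>I0 I1 (z :: 'n \<Rightarrow> complex^'m^'m). I0 \<subseteq> I1 \<longrightarrow>
              opnorm g (Hcomp g I0 I1) (Tcomp g z I0 I1) \<le> opnorm g (Hsub g I0) (Tmap z))"
    using i_ii[OF k] by blast
  have i3: "(\<forall>I0 I1 (z :: 'n \<Rightarrow> complex^'m^'m). I0 \<subseteq> I1 \<and> (\<exists>p. I1 - I0 = {p}) \<longrightarrow>
              opnorm g (Hcomp g I0 I1) (Tcomp g z I0 I1) \<le> opnorm g (Hsub g I0) (Tmap z))
        \<Longrightarrow> discrete_interp_kernel g TYPE('m)"
    using iii_i[OF k] by blast
  have i23: "(\<forall>I0 I1 (z :: 'n \<Rightarrow> complex^'m^'m). I0 \<subseteq> I1 \<longrightarrow>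
              opnorm g (Hcomp g I0 I1) (Tcomp g z I0 I1) \<le> opnorm g (Hsub g I0) (Tmap z)) \<Longrightarrow>
       (\<forall>I0 I1 (z :: 'n \<Rightarrow> complex^'m^'m). I0 \<subseteq> I1 \<and> (\<exists>p. I1 - I0 = {p}) \<longrightarrow>
              opnorm g (Hcomp g I0 I1) (Tcomp g z I0 I1) \<le> opnorm g (Hsub g I0) (Tmap z))"
    by simp
  show ?thesis
  proof (intro conjI iffI)
    assume "discrete_interp_kernel g TYPE('m)" then show "\<forall>I0 I1 (z :: 'n \<Rightarrow> complex^'m^'m). I0 \<subseteq> I1 \<longrightarrow>
              opnorm g (Hcomp g I0 I1) (Tcomp g z I0 I1) \<le> opnorm g (Hsub g I0) (Tmap z)" by (rule i2)
  next
    assume "\<forall>I0 I1 (z :: 'n \<Rightarrow> complex^'m^'m). I0 \<subseteq> I1 \<longrightarrow>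
              opnorm g (Hcomp g I0 I1) (Tcomp g z I0 I1) \<le> opnorm g (Hsub g I0) (Tmap z)"
    then show "discrete_interp_kernel g TYPE('m)" by (rule i3[OF i23])
  next
    assume "\<forall>I0 I1 (z :: 'n \<Rightarrow> complex^'m^'m). I0 \<subseteq> I1 \<longrightarrow>
              opnorm g (Hcomp g I0 I1) (Tcomp g z I0 I1) \<le> opnorm g (Hsub g I0) (Tmap z)"
    then show "\<forall>I0 I1 (z :: 'n \<Rightarrow> complex^'m^'m). I0 \<subseteq> I1 \<and> (\<exists>p. I1 - I0 = {p}) \<longrightarrow>
              opnorm g (Hcomp g I0 I1) (Tcomp g z I0 I1) \<le> opnorm g (Hsub g I0) (Tmap z)" by (rule i23)
  next
    assume "\<forall>I0 I1 (z :: 'n \<Rightarrow> complex^'m^'m). I0 \<subseteq> I1 \<and> (\<exists>p. I1 - I0 = {p}) \<longrightarrow>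
              opnorm g (Hcomp g I0 I1) (Tcomp g z I0 I1) \<le> opnorm g (Hsub g I0) (Tmap z)"
    then show "\<forall>I0 I1 (z :: 'n \<Rightarrow> complex^'m^'m). I0 \<subseteq> I1 \<longrightarrow>
              opnorm g (Hcomp g I0 I1) (Tcomp g z I0 I1) \<le> opnorm g (Hsub g I0) (Tmap z)" by (rule i2[OF i3])
  qed
qed

end
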